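(* Let $p\equiv1\pmod8$ and $q\equiv3\pmod8$ be primes with $\left(\frac pq\right)=1$, $\mathbb{K}=\mathbb{Q}(\sqrt2,\sqrt p,\sqrt q)$, and write $\varepsilon_{2pq}=x+y\sqrt{2pq}$, $\varepsilon_{pq}=v+w\sqrt{pq}$ with integers $x,y,v,w$. For $\eta\in\mathbb{K}$ and $\sigma\in\mathrm{Gal}(\mathbb{K}/\mathbb{Q})$ put $\eta^{1+\sigma}=\eta\sigma(\eta)$. Then $\varepsilon_{2pq}$ and $\varepsilon_{pq}$ are squares in $\mathbb{K}$ and, for either square root $\eta$ of $\varepsilon_{2pq}$ in $\mathbb{K}$, the values $(\eta^{1+\tau_2},\eta^{1+\tau_1\tau_2},\eta^{1+\tau_1\tau_3},\eta^{1+\tau_2\tau_3},\eta^{1+\tau_1})$ are: $(-1,-\varepsilon_{2pq},-\varepsilon_{2pq},\varepsilon_{2pq},1)$ if $x-1$ is a square in $\mathbb{N}$; $(1,\varepsilon_{2pq},-\varepsilon_{2pq},-\varepsilon_{2pq},1)$ if $p(x-1)$ is a square in $\mathbb{N}$; $(-1,-\varepsilon_{2pq},\varepsilon_{2pq},-\varepsilon_{2pq},1)$ if $2p(x+1)$ is a square in $\mathbb{N}$. For either square root $\eta$ of $\varepsilon_{pq}$ in $\mathbb{K}$, the same tuple equals: $(-1,1,1,\varepsilon_{pq},-\varepsilon_{pq})$ if $v-1$ is a square in $\mathbb{N}$; $(1,-1,1,-\varepsilon_{pq},-\varepsilon_{pq})$ if $p(v-1)$ is a square in $\mathbb{N}$;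 $(-1,-1,1,-\varepsilon_{pq},\varepsilon_{pq})$ if $2p(v+1)$ is a square in $\mathbb{N}$.
   Context: For squarefree $d>1$, $\varepsilon_d>1$ is the fundamental unit of $\mathbb{Q}(\sqrt d)$. Under the hypotheses, exactly one of $x-1$, $p(x-1)$, $2p(x+1)$ is a square in $\mathbb{N}$ and exactly one of $v-1$, $p(v-1)$, $2p(v+1)$ is. $\tau_1,\tau_2,\tau_3\in\mathrm{Gal}(\mathbb{K}/\mathbb{Q})$: $\tau_1$ sends $\sqrt2\mapsto-\sqrt2$ and fixes $\sqrt p,\sqrt q$; $\tau_2$ sends $\sqrt p\mapsto-\sqrt p$ and fixes $\sqrt2,\sqrt q$; $\tau_3$ sends $\sqrt q\mapsto-\sqrt q$ and fixes $\sqrt2,\sqrt p$. *)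

theory Defs
  imports "HOL-Computational_Algebra.Polynomial" "HOL-Number_Theory.Number_Theory"
begin

definition quad_field :: "nat \<Rightarrow> real set" where
  "quad_field d = {a + b * sqrt (real d) | a b. a \<in> \<rat> \<and> b \<in> \<rat>}"

definition quad_unit :: "nat \<Rightarrow> real \<Rightarrow> bool" where
  "quad_unit d u \<longleftrightarrow> u \<in> quad_field d \<and> u \<noteq> 0 \<and> algebraic_int u \<and> algebraic_int (inverse u)"

definition fund_unit :: "nat \<Rightarrow> real" where
  "fund_unit d = (THE e. quad_unit d e \<and> e > 1 \<and> (\<forall>u. quad_unit d u \<and> u > 1 \<longrightarrow> e \<le> u))"

definition triquad_field :: "nat \<Rightarrow> nat \<Rightarrow> real set" where
  "triquad_field p q = {a0 + a1 * sqrt 2 + a2 * sqrt (real p) + a3 * sqrt (real q)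
      + a4 * sqrt (2 * real p) + a5 * sqrt (2 * real q) + a6 * sqrt (real p * real q)
      + a7 * sqrt (2 * real p * real q)
     | a0 a1 a2 a3 a4 a5 a6 a7. a0 \<in> \<rat> \<and> a1 \<in> \<rat> \<and> a2 \<in> \<rat> \<and> a3 \<in> \<rat>
        \<and> a4 \<in> \<rat> \<and> a5 \<in> \<rat> \<and> a6 \<in> \<rat> \<and> a7 \<in> \<rat>}"

text \<open>Field automorphisms of K (automatically fixing Q).\<close>
definition field_aut :: "real set \<Rightarrow> (real \<Rightarrow> real) \<Rightarrow> bool" where
  "field_aut K \<sigma> \<longleftrightarrow> bij_betw \<sigma> K K \<and> \<sigma> 1 = 1 \<and>
     (\<forall>a\<in>K. \<forall>b\<in>K. \<sigma> (a + b) = \<sigma> a + \<sigma> b \<and> \<sigma> (a * b) = \<sigma> a * \<sigma> b)"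

definition is_nat_square :: "int \<Rightarrow> bool" where
  "is_nat_square z \<longleftrightarrow> (\<exists>n::nat. z = int n ^ 2)"

end

theory Submission
  imports Defs "HOL-Analysis.Kronecker_Approximation_Theorem" "HOL-Computational_Algebra.Nth_Powers"
begin

lemma sqrt_rat_square:
  assumes "sqrt (real n) \<in> \<rat>"
  shows "\<exists>m::nat. n = m^2"
proof -
  from assms obtain m k :: nat where k: "k \<noteq> 0" and mk: "\<bar>sqrt (real n)\<bar> = real m / real k" and cop: "coprime m k"
    by (rule Rats_abs_nat_div_natE)
  have "sqrt (real n) * real k = real m" using mk k by (simp add: field_simps)
  hence "real n * real k ^ 2 = real m ^ 2"
    by (metis of_nat_0_le_iff power_mult_distrib real_sqrt_pow2)
  hence eq: "n * k^2 = m^2" by (metis of_nat_eq_iff of_nat_mult of_nat_power)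
  hence "k^2 dvd m^2" by (metis dvd_triv_right)
  moreover have "coprime (k^2) (m^2)" using cop by (simp add: coprime_commute)
  ultimately have "k^2 dvd 1" by (metis coprime_common_divisor dvd_refl)
  hence "k = 1" by simp
  thus ?thesis using eq by auto
qed

lemma mpi_add: "map_poly (of_int :: int \<Rightarrow> real) (p + q) = map_poly of_int p + map_poly of_int q"
  by (intro poly_eqI) (simp add: coeff_map_poly)

lemma mpi_mult: "map_poly (of_int :: int \<Rightarrow> real) (p * q) = map_poly of_int p * map_poly of_int q"
proof (induction p)
  case 0 thus ?case by simp
next
  case (pCons a p)
  have "map_poly (of_int :: int \<Rightarrow> real) (pCons a p * q) = map_poly of_int (Polynomial.smult a q + pCons 0 (p * q))"
    by simp
  also have "\<dots> = Polynomial.smult (of_int a) (map_poly of_int q) + pCons 0 (map_poly of_int p * map_poly of_int q)"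
    by (simp add: mpi_add map_poly_smult map_poly_pCons pCons.IH)
  also have "\<dots> = map_poly of_int (pCons a p) * map_poly of_int q"
    by (simp add: map_poly_pCons)
  finally show ?case .
qed

lemma mpi_smult: "map_poly (of_int :: int \<Rightarrow> real) (Polynomial.smult c p) = Polynomial.smult (of_int c) (map_poly of_int p)"
  by (simp add: map_poly_smult)

lemma deg1_poly: "degree (r::int poly) \<le> 1 \<Longrightarrow> poly (map_poly (of_int :: int \<Rightarrow> real) r) x = of_int (Polynomial.coeff r 0) + of_int (Polynomial.coeff r 1) * x"
proof -
  assume "degree r \<le> 1"
  hence "r = [:Polynomial.coeff r 0, Polynomial.coeff r 1:]"
    by (intro poly_eqI) (auto simp: coeff_pCons coeff_eq_0 split: nat.splits)
  hence "poly (map_poly (of_int :: int \<Rightarrow> real) r) x = poly (map_poly of_int [:Polynomial.coeff r 0, Polynomial.coeff r 1:]) x" by simp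
  also have "\<dots> = of_int (Polynomial.coeff r 0) + of_int (Polynomial.coeff r 1) * x" by (simp add: map_poly_pCons)
  finally show ?thesis .
qed

lemma deg2_poly: "degree (r::int poly) \<le> 2 \<Longrightarrow> poly (map_poly (of_int :: int \<Rightarrow> real) r) x = of_int (Polynomial.coeff r 0) + of_int (Polynomial.coeff r 1) * x + of_int (Polynomial.coeff r 2) * x^2"
proof -
  assume "degree r \<le> 2"
  hence "r = [:Polynomial.coeff r 0, Polynomial.coeff r 1, Polynomial.coeff r 2:]"
    by (intro poly_eqI) (auto simp: coeff_pCons coeff_eq_0 numeral_2_eq_2 split: nat.splits)
  hence "poly (map_poly (of_int :: int \<Rightarrow> real) r) x = poly (map_poly of_int [:Polynomial.coeff r 0, Polynomial.coeff r 1, Polynomial.coeff r 2:]) x" by simp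
  also have "\<dots> = of_int (Polynomial.coeff r 0) + of_int (Polynomial.coeff r 1) * x + of_int (Polynomial.coeff r 2) * x^2"
    by (simp add: map_poly_pCons algebra_simps power2_eq_square)
  finally show ?thesis .
qed

lemma content_int_nonneg: "Polynomial.content (p::int poly) \<ge> 0"
proof -
  have "\<bar>Polynomial.content p\<bar> = Polynomial.content p" using normalize_content[of p] by simp
  thus ?thesis by (metis abs_ge_zero)
qed

lemma quad_algint:
  fixes a b :: real and d :: nat
  assumes irr: "sqrt (real d) \<notin> \<rat>" and a: "a \<in> \<rat>" and b: "b \<in> \<rat>" "b \<noteq> 0"
    and ai: "algebraic_int (a + b * sqrt (real d))"
  shows "2*a \<in> \<int> \<and> a^2 - real d * b^2 \<in> \<int>"
proof -
  define u where "u = a + b * sqrt (real d)"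
  define t where "t = 2*a"
  define N where "N = a^2 - real d * b^2"
  have ss: "sqrt (real d) * sqrt (real d) = real d" by simp
  have ueq: "u^2 - t*u + N = 0" unfolding u_def t_def N_def
    by (simp add: algebra_simps power2_eq_square ss)
  have uirr: "s = 0" if "r \<in> \<rat>" "s \<in> \<rat>" "r + s*u = 0" for r s
  proof (rule ccontr)
    assume s: "s \<noteq> 0"
    hence "u = -r/s" using that(3) by (simp add: field_simps)
    hence "u \<in> \<rat>" using that by simp
    hence "(u - a)/b \<in> \<rat>" using a b by simp
    moreover have "(u - a)/b = sqrt (real d)" using b unfolding u_def by simp
    ultimately show False using irr by simp
  qed
  have "t \<in> \<rat>" using a unfolding t_def by simp
  then obtain t1 t2 where t12: "t2 > 0" "t = of_int t1 / of_int t2" by (rule Rats_cases') auto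
  have "N \<in> \<rat>" using a b unfolding N_def by simp
  then obtain n1 n2 where n12: "n2 > 0" "N = of_int n1 / of_int n2" by (rule Rats_cases') auto
  define m0 :: "int poly" where "m0 = [: n1*t2, -(t1*n2), t2*n2 :]"
  have m0nz: "m0 \<noteq> 0" using t12 n12 by (simp add: m0_def)
  have dm0: "degree m0 = 2" using t12 n12 by (simp add: m0_def)
  have cm02: "Polynomial.coeff m0 2 = t2*n2" "Polynomial.coeff m0 1 = -(t1*n2)" "Polynomial.coeff m0 0 = n1*t2" by (simp_all add: m0_def numeral_2_eq_2)
  define c where "c = Polynomial.content m0"
  define m where "m = primitive_part m0"
  have cpos: "c > 0" using m0nz unfolding c_def
    using content_int_nonneg[of m0] content_eq_zero_iff[of m0] by linarith
  have m0m: "m0 = Polynomial.smult c m" unfolding c_def m_def by simp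
  have cm: "Polynomial.content m = 1" unfolding m_def using m0nz by simp
  have dm: "degree m = 2" unfolding m_def using dm0 by simp
  have cc: "Polynomial.coeff m0 i = c * Polynomial.coeff m i" for i using m0m by (metis coeff_smult)
  have m2pos: "Polynomial.coeff m 2 > 0"
    using cc[of 2] cm02 cpos t12 n12 by (metis mult_pos_pos zero_less_mult_pos)
  have pm0: "poly (map_poly of_int m0) u = 0"
  proof -
    have "poly (map_poly of_int m0) u = of_int (n1*t2) + of_int (-(t1*n2)) * u + of_int (t2*n2) * u^2"
      using deg2_poly[of m0 u] dm0 cm02 by simp
    also have "\<dots> = of_int t2 * of_int n2 * (u^2 - t*u + N)"
    proof -
      have e1: "real_of_int t1 = t * of_int t2" and e2: "real_of_int n1 = N * of_int n2"
        using t12 n12 by simp_all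
      show ?thesis by (simp add: e1 e2 algebra_simps)
    qed
    finally show ?thesis using ueq by simp
  qed
  have pm: "poly (map_poly of_int m) u = 0"
    using pm0 cpos by (simp add: m0m mpi_smult)
  obtain P where P: "poly (map_poly of_int P) u = 0" "lead_coeff P = 1"
    using ai unfolding u_def[symmetric] algebraic_int_altdef_ipoly by blast
  have Pnz: "P \<noteq> 0" using P by auto
  obtain q r where qr: "pseudo_divmod P m = (q, r)" by (metis surj_pair)
  have mnz: "m \<noteq> 0" using dm by auto
  define k where "k = Suc (degree P) - degree m"
  have pd: "Polynomial.smult (Polynomial.coeff m (degree m) ^ k) P = m * q + r"
    using pseudo_divmod(1)[OF mnz qr] unfolding k_def .
  have rdeg: "r = 0 \<or> degree r < degree m" using pseudo_divmod(2)[OF mnz qr] .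
  have "poly (map_poly of_int (Polynomial.smult (Polynomial.coeff m (degree m) ^ k) P)) u = 0"
    by (simp add: mpi_smult P)
  hence "poly (map_poly of_int r) u = 0"
    unfolding pd by (simp add: mpi_add mpi_mult pm)
  moreover have "degree r \<le> 1" using rdeg dm by auto
  ultimately have "of_int (Polynomial.coeff r 0) + of_int (Polynomial.coeff r 1) * u = 0" using deg1_poly by metis
  hence r1: "of_int (Polynomial.coeff r 1) = (0::real)" using uirr[of "of_int (Polynomial.coeff r 0)" "of_int (Polynomial.coeff r 1)"] Rats_of_int by blast
  hence "Polynomial.coeff r 0 = 0" using \<open>of_int (Polynomial.coeff r 0) + of_int (Polynomial.coeff r 1) * u = 0\<close> by simp
  with r1 \<open>degree r \<le> 1\<close> have "r = 0"
    proof (intro poly_eqI)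
    fix n show "Polynomial.coeff r n = Polynomial.coeff 0 n"
    proof (cases "n \<le> 1")
      case True thus ?thesis using r1 \<open>Polynomial.coeff r 0 = 0\<close> by (cases n) auto
    next
      case False thus ?thesis using \<open>degree r \<le> 1\<close> by (simp add: coeff_eq_0)
    qed
  qed
  hence pd2: "Polynomial.smult (Polynomial.coeff m 2 ^ k) P = m * q" using pd dm by simp
  have cP: "Polynomial.content P = 1"
  proof -
    have "Polynomial.content P dvd Polynomial.coeff P (degree P)" by (rule content_dvd_coeff)
    hence "Polynomial.content P dvd 1" using P by simp
    thus ?thesis using content_int_nonneg[of P] by (simp add: zdvd1_eq)
  qed
  have "Polynomial.content (Polynomial.smult (Polynomial.coeff m 2 ^ k) P) = Polynomial.coeff m 2 ^ k"
    using cP m2pos by simp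
  hence cq: "Polynomial.content q = Polynomial.coeff m 2 ^ k" using pd2 cm by (simp add: content_mult)
  have "Polynomial.smult (Polynomial.coeff m 2 ^ k) P = Polynomial.smult (Polynomial.coeff m 2 ^ k) (m * primitive_part q)"
    using pd2 content_times_primitive_part[of q] cq by (metis mult_smult_right)
  moreover have "Polynomial.coeff m 2 ^ k \<noteq> 0" using m2pos by simp
  ultimately have "P = m * primitive_part q" by (metis smult_cancel)
  hence "lead_coeff P = lead_coeff m * lead_coeff (primitive_part q)" by (simp add: lead_coeff_mult)
  hence "Polynomial.coeff m 2 * lead_coeff (primitive_part q) = 1" using P dm by simp
  hence m21: "Polynomial.coeff m 2 = 1" using m2pos by (metis pos_zmult_eq_1_iff)
  have cval: "c = t2*n2" using cc[of 2] cm02 m21 by simp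
  have "of_int n1 * of_int t2 = (of_int c * of_int (Polynomial.coeff m 0) :: real)" using cc[of 0] cm02 by (metis of_int_mult)
  hence "N = of_int (Polynomial.coeff m 0)" using n12 t12 cval by (simp add: field_simps)
  moreover have "of_int (-(t1*n2)) = (of_int c * of_int (Polynomial.coeff m 1) :: real)" using cc[of 1] cm02 by (metis of_int_mult)
  hence "real_of_int n2 * real_of_int t2 * (t + of_int (Polynomial.coeff m 1)) = 0"
    using t12 cval by (simp add: algebra_simps)
  hence "t = - of_int (Polynomial.coeff m 1)" using n12 t12 by simp
  ultimately show ?thesis unfolding t_def N_def by simp
qed

lemma int_inv_unit:
  fixes x :: real
  assumes "x \<in> \<int>" "1/x \<in> \<int>" "x \<noteq> 0"
  shows "x = 1 \<or> x = -1"
proof -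
  obtain i where i: "x = of_int i" using assms(1) by (auto elim: Ints_cases)
  obtain j where j: "1/x = of_int j" using assms(2) by (auto elim: Ints_cases)
  from assms(3) have "of_int (i*j) = (1::real)" using i j by (simp add: field_simps)
  hence "i * j = 1" by (metis of_int_eq_1_iff)
  hence "i = 1 \<or> i = -1" by (auto simp add: zmult_eq_1_iff)
  thus ?thesis using i by auto
qed

lemma unit_norm:
  fixes d :: nat and u :: real
  assumes irr: "sqrt (real d) \<notin> \<rat>" and un: "quad_unit d u"
  shows "\<exists>a b. a \<in> \<rat> \<and> b \<in> \<rat> \<and> u = a + b * sqrt (real d) \<and>
           (a^2 - real d * b^2 = 1 \<or> a^2 - real d * b^2 = -1) \<and> 2*a \<in> \<int>"
proof -
  from un obtain a b where ab: "a \<in> \<rat>" "b \<in> \<rat>" "u = a + b * sqrt (real d)"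
    unfolding quad_unit_def quad_field_def by blast
  have unz: "u \<noteq> 0" and ai: "algebraic_int u" and aii: "algebraic_int (inverse u)"
    using un unfolding quad_unit_def by auto
  have ss: "sqrt (real d) * sqrt (real d) = real d" by simp
  show ?thesis
  proof (cases "b = 0")
    case True
    hence ua: "u = a" using ab by simp
    have "u \<in> \<int>" using ai ab ua by (metis rational_algebraic_int_is_int)
    moreover have "1/u \<in> \<int>" using aii ab ua
      by (metis Rats_inverse inverse_eq_divide rational_algebraic_int_is_int)
    ultimately have "u = 1 \<or> u = -1" using unz by (rule int_inv_unit)
    hence "a^2 - real d * b^2 = 1" using True ua by auto
    moreover have "2*a \<in> \<int>" using \<open>u \<in> \<int>\<close> ua by simp
    ultimately show ?thesis using ab by blast
  next
    case False
    have q1: "2*a \<in> \<int> \<and> a^2 - real d * b^2 \<in> \<int>"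
      using quad_algint[OF irr ab(1,2) False] ai ab(3) by simp
    define N where "N = a^2 - real d * b^2"
    have Nnz: "N \<noteq> 0"
    proof
      assume "N = 0"
      hence "(a/b)^2 = real d" using False unfolding N_def by (simp add: field_simps)
      hence "sqrt (real d) = \<bar>a/b\<bar>" by (metis real_sqrt_abs)
      moreover have "\<bar>a/b\<bar> \<in> \<rat>" using ab by simp
      ultimately show False using irr by simp
    qed
    have "u * (a - b * sqrt (real d)) = N" unfolding N_def ab(3)
      by (simp add: algebra_simps power2_eq_square ss)
    hence inv: "inverse u = a/N + (-b/N) * sqrt (real d)"
      using unz Nnz by (simp add: field_simps)
    have "-b/N \<noteq> 0" using False Nnz by simp
    hence "(a/N)^2 - real d * (-b/N)^2 \<in> \<int>"
      using quad_algint[OF irr _ _ _, of "a/N" "-b/N"] aii inv ab q1 N_def by simp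
    moreover have "(a/N)^2 - real d * (-b/N)^2 = 1/N"
    proof -
      have "(a/N)^2 - real d * (-b/N)^2 = (a^2 - real d*b^2)/N^2" by (simp add: power_divide diff_divide_distrib)
      also have "\<dots> = 1/N" using Nnz unfolding N_def[symmetric] by (simp add: power2_eq_square)
      finally show ?thesis .
    qed
    ultimately have "1/N \<in> \<int>" by simp
    moreover have "N \<in> \<int>" using q1 N_def by simp
    ultimately have "N = 1 \<or> N = -1" using int_inv_unit[of N] Nnz by blast
    hence "a^2 - real d * b^2 = 1 \<or> a^2 - real d * b^2 = -1" unfolding N_def .
    thus ?thesis using ab q1 by blast
  qed
qed

lemma pell_exists:
  fixes d :: nat
  assumes irr: "sqrt (real d) \<notin> \<rat>"
  shows "\<exists>X Y::int. X > 0 \<and> Y > 0 \<and> X^2 - int d * Y^2 = 1"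
proof -
  define \<theta> where "\<theta> = sqrt (real d)"
  have dpos: "d > 0" using irr by (cases "d = 0") auto
  have thpos: "\<theta> > 0" using dpos unfolding \<theta>_def by simp
  have th2: "\<theta> * \<theta> = real d" unfolding \<theta>_def by simp
  have nz: "of_int k * \<theta> - of_int h \<noteq> 0" if "k > 0" for h k :: int
  proof
    assume "of_int k * \<theta> - of_int h = 0"
    hence "\<theta> = of_int h / of_int k" using that by (simp add: field_simps)
    hence "\<theta> \<in> \<rat>" by simp
    thus False using irr unfolding \<theta>_def by simp
  qed
  define S where "S = {(h::int,k::int). k > 0 \<and> \<bar>of_int k * \<theta> - of_int h\<bar> < 1 / of_int k}"
  have inS: "(h,k) \<in> S" if "0 < k" "k \<le> int N" "\<bar>of_int k * \<theta> - of_int h\<bar> < 1/real N" for h k N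
  proof -
    have "1 / real N \<le> 1 / of_int k" using that by (simp add: frac_le)
    thus ?thesis using that unfolding S_def by auto
  qed
  have one: "(1::nat) > 0" by simp
  have Sne: "S \<noteq> {}"
  proof -
    obtain h k where "0 < k" "k \<le> int 1" "\<bar>of_int k * \<theta> - of_int h\<bar> < 1/real (1::nat)"
      using Dirichlet_approx[OF one, of \<theta>] by blast
    thus ?thesis using inS by blast
  qed
  have Sinf: "infinite S"
  proof
    assume fin: "finite S"
    define \<delta> where "\<delta> = Min ((\<lambda>(h,k). \<bar>of_int k * \<theta> - of_int h\<bar>) ` S)"
    have dpos': "\<delta> > 0" unfolding \<delta>_def using fin Sne nz by (auto simp: S_def)
    obtain N :: nat where N: "1/\<delta> < real N" using reals_Archimedean2 by blast
    have Npos: "N > 0" using N dpos' by (cases "N = 0") (auto simp: field_simps)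
    obtain h k where hk: "0 < k" "k \<le> int N" "\<bar>of_int k * \<theta> - of_int h\<bar> < 1/real N"
      using Dirichlet_approx[OF Npos, of \<theta>] by blast
    have "(h,k) \<in> S" using inS hk by blast
    hence "\<delta> \<le> \<bar>of_int k * \<theta> - of_int h\<bar>" unfolding \<delta>_def using fin by (intro Min_le) auto
    moreover have "1/real N < \<delta>" using N dpos' Npos by (simp add: field_simps)
    ultimately show False using hk by simp
  qed
  define M :: int where "M = \<lceil>1 + 2*\<theta>\<rceil>"
  define nrm where "nrm = (\<lambda>(h::int,k::int). h^2 - int d * k^2)"
  have nrm_bound: "\<bar>nrm hk\<bar> \<le> M \<and> nrm hk \<noteq> 0" if "hk \<in> S" for hk
  proof -
    obtain h k where hk: "hk = (h,k)" by (cases hk)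
    have k: "k > 0" "\<bar>of_int k * \<theta> - of_int h\<bar> < 1 / of_int k" using that hk unfolding S_def by auto
    define e where "e = of_int k * \<theta> - of_int h"
    have eq: "real_of_int (nrm hk) = e * (e - 2 * of_int k * \<theta>)"
      unfolding hk nrm_def e_def by (simp add: algebra_simps power2_eq_square th2)
    have k1: "real_of_int k \<ge> 1" using k by simp
    have ek: "\<bar>e\<bar> * of_int k < 1" using k(2) k1 unfolding e_def by (simp add: field_simps)
    have e1: "\<bar>e\<bar> < 1" using ek k1
      by (metis abs_ge_zero less_le_trans mult_le_cancel_left1 not_le)
    have "\<bar>real_of_int (nrm hk)\<bar> = \<bar>e\<bar> * \<bar>e - 2 * of_int k * \<theta>\<bar>" unfolding eq by (simp add: abs_mult)
    also have "\<dots> \<le> \<bar>e\<bar> * (\<bar>e\<bar> + 2 * of_int k * \<theta>)"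
    proof (intro mult_left_mono)
      have pos: "2 * of_int k * \<theta> > 0" using thpos k by simp
      have "\<bar>e - 2 * of_int k * \<theta>\<bar> \<le> \<bar>e\<bar> + \<bar>2 * of_int k * \<theta>\<bar>" by (rule abs_triangle_ineq4)
      thus "\<bar>e - 2 * of_int k * \<theta>\<bar> \<le> \<bar>e\<bar> + 2 * of_int k * \<theta>" using pos by simp
    qed simp
    also have "\<dots> = \<bar>e\<bar> * \<bar>e\<bar> + 2 * \<theta> * (\<bar>e\<bar> * of_int k)" by (simp add: algebra_simps)
    also have "\<dots> \<le> 1 + 2 * \<theta>"
    proof -
      have "\<bar>e\<bar> * \<bar>e\<bar> \<le> 1" using e1 by (metis abs_ge_zero less_imp_le mult_le_one)
      moreover have "2 * \<theta> * (\<bar>e\<bar> * of_int k) \<le> 2 * \<theta>" using ek thpos by (simp add: less_imp_le)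
      ultimately show ?thesis by linarith
    qed
    finally have "\<bar>real_of_int (nrm hk)\<bar> \<le> 1 + 2*\<theta>" .
    hence "\<bar>nrm hk\<bar> \<le> M" unfolding M_def by linarith
    moreover have "nrm hk \<noteq> 0"
    proof
      assume "nrm hk = 0"
      hence "e = 0 \<or> e - 2 * of_int k * \<theta> = 0" using eq by simp
      moreover have "e \<noteq> 0" using nz k unfolding e_def by blast
      moreover have "e - 2 * of_int k * \<theta> \<noteq> 0"
      proof
        assume "e - 2 * of_int k * \<theta> = 0"
        hence "e = 2 * of_int k * \<theta>" by simp
        moreover have "2 * of_int k * \<theta> \<ge> 2"
        proof -
          have th1: "\<theta> \<ge> 1" using dpos unfolding \<theta>_def by simp
          have "of_int k * \<theta> \<ge> 1 * 1" by (rule mult_mono) (use k1 th1 in auto)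
          thus ?thesis by simp
        qed
        ultimately show False using e1 by simp
      qed
      ultimately show False by blast
    qed
    ultimately show ?thesis by blast
  qed
  define f where "f = (\<lambda>(h::int,k::int). (nrm (h,k), h mod nrm (h,k), k mod nrm (h,k)))"
  have "f ` S \<subseteq> {-M..M} \<times> {-M..M} \<times> {-M..M}"
  proof
    fix z assume "z \<in> f ` S"
    then obtain h k where hk: "(h,k) \<in> S" "z = f (h,k)" by auto
    have b: "\<bar>nrm (h,k)\<bar> \<le> M" "nrm (h,k) \<noteq> 0" using nrm_bound[OF hk(1)] by auto
    have "\<bar>h mod nrm (h,k)\<bar> < \<bar>nrm (h,k)\<bar>" "\<bar>k mod nrm (h,k)\<bar> < \<bar>nrm (h,k)\<bar>"
      using b(2) by (simp_all add: abs_mod_less)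
    thus "z \<in> {-M..M} \<times> {-M..M} \<times> {-M..M}" using b hk(2) unfolding f_def by auto
  qed
  hence "finite (f ` S)" by (rule finite_subset) auto
  from pigeonhole_infinite[OF Sinf this] obtain a0 where a0: "a0 \<in> S" "infinite {a\<in>S. f a = f a0}"
    by blast
  have "{a\<in>S. f a = f a0} - {a0} \<noteq> {}"
  proof
    assume "{a\<in>S. f a = f a0} - {a0} = {}"
    hence "{a\<in>S. f a = f a0} \<subseteq> {a0}" by blast
    hence "finite {a\<in>S. f a = f a0}" by (rule finite_subset) simp
    thus False using a0(2) by simp
  qed
  then obtain a1 where a1: "a1 \<in> S" "f a1 = f a0" "a1 \<noteq> a0" by blast
  obtain h1 k1 where e0: "a0 = (h1,k1)" by (cases a0)
  obtain h2 k2 where e1: "a1 = (h2,k2)" by (cases a1)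
  define n where "n = nrm (h1,k1)"
  have n2: "nrm (h2,k2) = n" and mh: "h2 mod n = h1 mod n" and mk: "k2 mod n = k1 mod n"
    using a1(2) unfolding e0 e1 f_def n_def by auto
  have nnz: "n \<noteq> 0" using nrm_bound[OF a0(1)] unfolding n_def e0 by simp
  have kpos: "k1 > 0" "k2 > 0" using a0(1) a1(1) e0 e1 unfolding S_def by auto
  have "n dvd h2 - h1" using mh by (simp add: mod_eq_dvd_iff)
  then obtain \<alpha> where al: "h2 - h1 = n * \<alpha>" by (auto elim: dvdE)
  have "n dvd k2 - k1" using mk by (simp add: mod_eq_dvd_iff)
  then obtain \<beta> where be: "k2 - k1 = n * \<beta>" by (auto elim: dvdE)
  have nd1: "n = h1^2 - int d * k1^2" using n_def unfolding nrm_def by simp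
  have nd2: "n = h2^2 - int d * k2^2" using n2 unfolding nrm_def by simp
  define X where "X = 1 + \<alpha> * h1 - int d * \<beta> * k1"
  define Y where "Y = \<alpha> * k1 - \<beta> * h1"
  have h2e: "h2 = h1 + n*\<alpha>" "k2 = k1 + n*\<beta>" using al be by simp_all
  have "h1 * h2 - int d * k1 * k2 = (h1^2 - int d * k1^2) + n*(\<alpha>*h1 - int d*\<beta>*k1)"
    unfolding h2e by (simp add: algebra_simps power2_eq_square)
  also have "\<dots> = n * X" unfolding X_def nd1[symmetric] by (simp add: algebra_simps)
  finally have nX: "n * X = h1 * h2 - int d * k1 * k2" by simp
  have "n * Y = (n*\<alpha>)*k1 - (n*\<beta>)*h1" by (simp add: Y_def algebra_simps)
  also have "\<dots> = h2 * k1 - h1 * k2" unfolding al[symmetric] be[symmetric] by (simp add: algebra_simps)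
  finally have nY: "n * Y = h2 * k1 - h1 * k2" .
  have idn: "(h1*h2 - int d*k1*k2)^2 - int d * (h2*k1 - h1*k2)^2 = (h1^2 - int d*k1^2)*(h2^2 - int d*k2^2)"
    by (simp add: algebra_simps power2_eq_square)
  have "(n*X)^2 - int d * (n*Y)^2 = n * n"
    unfolding nX nY idn using nd1 nd2 by simp
  hence "n * n * (X^2 - int d * Y^2) = n * n * 1" by (simp add: algebra_simps power2_eq_square)
  hence XY: "X^2 - int d * Y^2 = 1" using nnz by simp
  have Ynz: "Y \<noteq> 0"
  proof
    assume "Y = 0"
    hence hk: "h2 * k1 = h1 * k2" using nY by simp
    have "n * k2^2 = (h1*k2)^2 - int d * k1^2 * k2^2" unfolding nd1 by (simp add: algebra_simps power2_eq_square)
    also have "\<dots> = (h2*k1)^2 - int d * k1^2 * k2^2" using hk by simp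
    also have "\<dots> = n * k1^2" unfolding nd2 by (simp add: algebra_simps power2_eq_square)
    finally have "n * k2^2 = n * k1^2" .
    hence "k2^2 = k1^2" using nnz by simp
    hence "k2 = k1" using kpos power2_eq_iff_nonneg[of k2 k1] by simp
    hence "h2 = h1" using hk kpos by simp
    thus False using a1(3) e0 e1 \<open>k2 = k1\<close> by simp
  qed
  have Xnz: "X \<noteq> 0"
  proof
    assume "X = 0"
    hence "- int d * Y^2 = 1" using XY by simp
    moreover have "int d * Y^2 \<ge> 0" by simp
    ultimately show False by linarith
  qed
  show ?thesis
    by (rule exI[of _ "\<bar>X\<bar>"], rule exI[of _ "\<bar>Y\<bar>"]) (use XY Xnz Ynz in auto)
qed

lemma quad_unit_int:
  fixes X Y :: int and d :: nat
  assumes "X^2 - int d * Y^2 = 1" "X > 0" "Y > 0"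
  shows "quad_unit d (X + Y * sqrt (real d))"
proof -
  define u where "u = X + Y * sqrt (real d)"
  have ss: "sqrt (real d) * sqrt (real d) = real d" by simp
  have XYr: "(real_of_int X)^2 - real d * (real_of_int Y)^2 = 1"
    using assms(1) by (metis of_int_1 of_int_diff of_int_mult of_int_of_nat_eq of_int_power)
  have upos: "u > 0" unfolding u_def using assms by (simp add: add_pos_nonneg)
  have inv: "inverse u = X - Y * sqrt (real d)"
  proof -
    have "u * (X - Y * sqrt (real d)) = 1" unfolding u_def using XYr
      by (simp add: algebra_simps power2_eq_square ss)
    thus ?thesis using upos by (simp add: field_simps)
  qed
  define P :: "real poly" where "P = [:1, -2*X, 1:]"
  have Pc: "\<forall>i. Polynomial.coeff P i \<in> \<int>" unfolding P_def
    by (auto simp: coeff_pCons split: nat.splits)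
  have Pl: "lead_coeff P = 1" unfolding P_def by simp
  have Pu: "poly P u = 0" unfolding P_def u_def using XYr
    by (simp add: algebra_simps power2_eq_square ss)
  have Pi: "poly P (X - Y * sqrt (real d)) = 0" unfolding P_def using XYr
    by (simp add: algebra_simps power2_eq_square ss)
  have "algebraic_int u" using Pc Pl Pu by (intro algebraic_int.intros)
  moreover have "algebraic_int (inverse u)" unfolding inv using Pc Pl Pi by (intro algebraic_int.intros)
  moreover have "u \<in> quad_field d" unfolding u_def quad_field_def by force
  ultimately show ?thesis unfolding quad_unit_def u_def[symmetric] using upos by simp
qed

lemma fund_unit_props:
  fixes d :: nat
  assumes irr: "sqrt (real d) \<notin> \<rat>"
  shows "quad_unit d (fund_unit d) \<and> fund_unit d > 1"
proof -
  obtain X Y :: int where XY: "X > 0" "Y > 0" "X^2 - int d * Y^2 = 1" using pell_exists[OF irr] by blast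
  define u0 where "u0 = X + Y * sqrt (real d)"
  have u0u: "quad_unit d u0" unfolding u0_def using quad_unit_int XY by blast
  have dpos: "d > 0" using irr by (cases "d = 0") auto
  have u01: "u0 > 1"
  proof -
    have "real_of_int X \<ge> 1" "real_of_int Y * sqrt (real d) > 0" using XY dpos by auto
    thus ?thesis unfolding u0_def by linarith
  qed
  define S where "S = {u. quad_unit d u \<and> 1 < u \<and> u \<le> u0}"
  define M :: int where "M = \<lceil>u0\<rceil> + 1"
  define g where "g = (\<lambda>(t::int, N::int). (of_int t + sqrt (of_int t^2 - 4 * of_int N)) / (2::real))"
  have ss: "sqrt (real d) * sqrt (real d) = real d" by simp
  have "S \<subseteq> g ` ({-M..M} \<times> {1,-1})"
  proof
    fix u assume uS: "u \<in> S"
    hence un: "quad_unit d u" and u1: "1 < u" "u \<le> u0" unfolding S_def by auto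
    obtain a b where ab: "a \<in> \<rat>" "b \<in> \<rat>" "u = a + b * sqrt (real d)"
       "a^2 - real d * b^2 = 1 \<or> a^2 - real d * b^2 = -1" "2*a \<in> \<int>"
      using unit_norm[OF irr un] by blast
    obtain t where t: "2*a = of_int t" using ab(5) by (auto elim: Ints_cases)
    define N :: int where "N = (if a^2 - real d * b^2 = 1 then 1 else -1)"
    have Nr: "of_int N = a^2 - real d * b^2" using ab(4) N_def by auto
    define v where "v = a - b * sqrt (real d)"
    have uv: "u * v = of_int N" unfolding Nr v_def ab(3) by (simp add: algebra_simps power2_eq_square ss)
    have "\<bar>of_int N\<bar> = (1::real)" unfolding N_def by simp
    hence "\<bar>u\<bar> * \<bar>v\<bar> = 1" using uv by (simp add: abs_mult[symmetric])
    hence "\<bar>v\<bar> = 1/u" using u1 by (simp add: field_simps)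
    hence vabs: "\<bar>v\<bar> < 1" using u1 by simp
    have tuv: "of_int t = u + v" using t unfolding v_def ab(3) by simp
    have "\<bar>of_int t\<bar> \<le> u0 + 1" using tuv vabs u1 by linarith
    hence tM: "t \<in> {-M..M}" unfolding M_def by (auto, linarith+)
    have "(u - v)^2 = of_int t^2 - 4 * of_int N" unfolding tuv Nr[symmetric] uv[symmetric]
      by (simp add: algebra_simps power2_eq_square)
    moreover have "u - v \<ge> 0" using vabs u1 by linarith
    ultimately have "sqrt (of_int t^2 - 4 * of_int N) = u - v" by (metis real_sqrt_abs abs_of_nonneg)
    hence "u = g (t, N)" unfolding g_def using tuv by simp
    moreover have "N \<in> {1,-1}" unfolding N_def by auto
    ultimately show "u \<in> g ` ({-M..M} \<times> {1,-1})" using tM by blast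
  qed
  hence finS: "finite S" by (rule finite_subset) auto
  have u0S: "u0 \<in> S" using u0u u01 unfolding S_def by auto
  define e where "e = Min S"
  have eS: "e \<in> S" unfolding e_def using finS u0S by (intro Min_in) auto
  have emin: "e \<le> v" if "v \<in> S" for v unfolding e_def using finS that by (rule Min_le)
  define P where "P = (\<lambda>e. quad_unit d e \<and> e > 1 \<and> (\<forall>u. quad_unit d u \<and> u > 1 \<longrightarrow> e \<le> u))"
  have Pe: "P e"
    unfolding P_def
  proof (intro conjI allI impI)
    show "quad_unit d e" "e > 1" using eS unfolding S_def by auto
    fix u assume u: "quad_unit d u \<and> 1 < u"
    show "e \<le> u"
    proof (cases "u \<le> u0")
      case True thus ?thesis using u emin unfolding S_def by auto
    next
      case False thus ?thesis using eS unfolding S_def by auto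
    qed
  qed
  have "fund_unit d = e" unfolding fund_unit_def
  proof (rule the_equality)
    show "quad_unit d e \<and> e > 1 \<and> (\<forall>u. quad_unit d u \<and> u > 1 \<longrightarrow> e \<le> u)" using Pe unfolding P_def .
    fix e' assume "quad_unit d e' \<and> e' > 1 \<and> (\<forall>u. quad_unit d u \<and> u > 1 \<longrightarrow> e' \<le> u)"
    thus "e' = e" using Pe unfolding P_def by (meson order_antisym)
  qed
  thus ?thesis using Pe unfolding P_def by simp
qed

lemma K_intro:
  assumes "a0 \<in> \<rat>" "a1 \<in> \<rat>" "a2 \<in> \<rat>" "a3 \<in> \<rat>" "a4 \<in> \<rat>" "a5 \<in> \<rat>" "a6 \<in> \<rat>" "a7 \<in> \<rat>"
  shows "a0 + a1 * sqrt 2 + a2 * sqrt (real p) + a3 * sqrt (real q)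
      + a4 * sqrt (2 * real p) + a5 * sqrt (2 * real q) + a6 * sqrt (real p * real q)
      + a7 * sqrt (2 * real p * real q) \<in> triquad_field p q"
  unfolding triquad_field_def using assms by blast

lemma K_elim:
  assumes "x \<in> triquad_field p q"
  obtains a0 a1 a2 a3 a4 a5 a6 a7 where "a0 \<in> \<rat>" "a1 \<in> \<rat>" "a2 \<in> \<rat>" "a3 \<in> \<rat>" "a4 \<in> \<rat>" "a5 \<in> \<rat>" "a6 \<in> \<rat>" "a7 \<in> \<rat>"
    "x = a0 + a1 * sqrt 2 + a2 * sqrt (real p) + a3 * sqrt (real q)
      + a4 * sqrt (2 * real p) + a5 * sqrt (2 * real q) + a6 * sqrt (real p * real q)
      + a7 * sqrt (2 * real p * real q)"
  using assms unfolding triquad_field_def mem_Collect_eq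
  apply (elim exE conjE)
  apply (rule that)
  prefer 9 apply assumption
  apply assumption+
  done

lemma K_add:
  assumes "x \<in> triquad_field p q" "y \<in> triquad_field p q"
  shows "x + y \<in> triquad_field p q"
proof -
  obtain a0 a1 a2 a3 a4 a5 a6 a7 where a: "a0 \<in> \<rat>" "a1 \<in> \<rat>" "a2 \<in> \<rat>" "a3 \<in> \<rat>" "a4 \<in> \<rat>" "a5 \<in> \<rat>" "a6 \<in> \<rat>" "a7 \<in> \<rat>"
    "x = a0 + a1 * sqrt 2 + a2 * sqrt (real p) + a3 * sqrt (real q)
      + a4 * sqrt (2 * real p) + a5 * sqrt (2 * real q) + a6 * sqrt (real p * real q)
      + a7 * sqrt (2 * real p * real q)" using assms(1) by (rule K_elim)
  obtain b0 b1 b2 b3 b4 b5 b6 b7 where b: "b0 \<in> \<rat>" "b1 \<in> \<rat>" "b2 \<in> \<rat>" "b3 \<in> \<rat>" "b4 \<in> \<rat>" "b5 \<in> \<rat>" "b6 \<in> \<rat>" "b7 \<in> \<rat>"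
    "y = b0 + b1 * sqrt 2 + b2 * sqrt (real p) + b3 * sqrt (real q)
      + b4 * sqrt (2 * real p) + b5 * sqrt (2 * real q) + b6 * sqrt (real p * real q)
      + b7 * sqrt (2 * real p * real q)" using assms(2) by (rule K_elim)
  have "x + y = (a0+b0) + (a1+b1) * sqrt 2 + (a2+b2) * sqrt (real p) + (a3+b3) * sqrt (real q)
      + (a4+b4) * sqrt (2 * real p) + (a5+b5) * sqrt (2 * real q) + (a6+b6) * sqrt (real p * real q)
      + (a7+b7) * sqrt (2 * real p * real q)" unfolding a(9) b(9) by (simp add: algebra_simps)
  also have "\<dots> \<in> triquad_field p q" using a b by (intro K_intro) auto
  finally show ?thesis .
qed

lemma K_scale:
  assumes "r \<in> \<rat>" "x \<in> triquad_field p q"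
  shows "r * x \<in> triquad_field p q"
proof -
  obtain a0 a1 a2 a3 a4 a5 a6 a7 where a: "a0 \<in> \<rat>" "a1 \<in> \<rat>" "a2 \<in> \<rat>" "a3 \<in> \<rat>" "a4 \<in> \<rat>" "a5 \<in> \<rat>" "a6 \<in> \<rat>" "a7 \<in> \<rat>"
    "x = a0 + a1 * sqrt 2 + a2 * sqrt (real p) + a3 * sqrt (real q)
      + a4 * sqrt (2 * real p) + a5 * sqrt (2 * real q) + a6 * sqrt (real p * real q)
      + a7 * sqrt (2 * real p * real q)" using assms(2) by (rule K_elim)
  have "r * x = (r*a0) + (r*a1) * sqrt 2 + (r*a2) * sqrt (real p) + (r*a3) * sqrt (real q)
      + (r*a4) * sqrt (2 * real p) + (r*a5) * sqrt (2 * real q) + (r*a6) * sqrt (real p * real q)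
      + (r*a7) * sqrt (2 * real p * real q)" unfolding a(9) by (simp add: algebra_simps)
  also have "\<dots> \<in> triquad_field p q" using a assms(1) by (intro K_intro) auto
  finally show ?thesis .
qed

lemma K_neg: "x \<in> triquad_field p q \<Longrightarrow> -x \<in> triquad_field p q"
  using K_scale[of "-1" x] by simp

lemma K_rat: "r \<in> \<rat> \<Longrightarrow> r \<in> triquad_field p q"
  using K_intro[of r 0 0 0 0 0 0 0] by simp

lemma K_s: "sqrt 2 \<in> triquad_field p q"
  using K_intro[of 0 1 0 0 0 0 0 0] by simp
lemma K_P: "sqrt (real p) \<in> triquad_field p q"
  using K_intro[of 0 0 1 0 0 0 0 0] by simp
lemma K_Q: "sqrt (real q) \<in> triquad_field p q"
  using K_intro[of 0 0 0 1 0 0 0 0] by simp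
lemma K_sP: "sqrt 2 * sqrt (real p) \<in> triquad_field p q"
  using K_intro[of 0 0 0 0 1 0 0 0] by (simp add: real_sqrt_mult)
lemma K_sQ: "sqrt 2 * sqrt (real q) \<in> triquad_field p q"
  using K_intro[of 0 0 0 0 0 1 0 0] by (simp add: real_sqrt_mult)
lemma K_PQ: "sqrt (real p) * sqrt (real q) \<in> triquad_field p q"
  using K_intro[of 0 0 0 0 0 0 1 0] by (simp add: real_sqrt_mult)
lemma K_sPQ: "sqrt 2 * sqrt (real p) * sqrt (real q) \<in> triquad_field p q"
  using K_intro[of 0 0 0 0 0 0 0 1] by (simp add: real_sqrt_mult)

lemma aut_add: "field_aut K \<tau> \<Longrightarrow> a \<in> K \<Longrightarrow> b \<in> K \<Longrightarrow> \<tau> (a + b) = \<tau> a + \<tau> b"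
  unfolding field_aut_def by blast
lemma aut_mult: "field_aut K \<tau> \<Longrightarrow> a \<in> K \<Longrightarrow> b \<in> K \<Longrightarrow> \<tau> (a * b) = \<tau> a * \<tau> b"
  unfolding field_aut_def by blast

lemma aut_of_nat:
  assumes "field_aut K \<tau>" "\<And>n::nat. real n \<in> K"
  shows "\<tau> (real n) = real n"
proof (induction n)
  case 0
  have "\<tau> (0 + 0) = \<tau> 0 + \<tau> 0" using assms aut_add[of K \<tau> 0 0] by (metis of_nat_0)
  thus ?case by simp
next
  case (Suc n)
  have "\<tau> (real n + 1) = \<tau> (real n) + \<tau> 1" using assms aut_add[of K \<tau> "real n" 1] by (metis of_nat_1)
  moreover have "\<tau> 1 = 1" using assms unfolding field_aut_def by blast
  ultimately show ?case using Suc by (simp add: add.commute)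
qed

lemma aut_rat:
  assumes aut: "field_aut (triquad_field p q) \<tau>" and r: "r \<in> \<rat>"
  shows "\<tau> r = r"
proof -
  let ?K = "triquad_field p q"
  have natK: "\<And>n::nat. real n \<in> ?K" by (intro K_rat) simp
  have neg: "\<tau> (-a) = - \<tau> a" if "a \<in> ?K" for a
  proof -
    have "\<tau> (a + -a) = \<tau> a + \<tau> (-a)" using aut that K_neg by (intro aut_add) auto
    moreover have "\<tau> 0 = 0" using aut_of_nat[OF aut natK, of 0] by simp
    ultimately show ?thesis by simp
  qed
  have intc: "\<tau> (of_int i) = of_int i" for i :: int
  proof (cases "i \<ge> 0")
    case True thus ?thesis using aut_of_nat[OF aut natK, of "nat i"] by simp
  next
    case False
    have "\<tau> (of_int i) = \<tau> (- real (nat (-i)))" using False by simp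
    also have "\<dots> = - \<tau> (real (nat (-i)))" using natK by (intro neg) auto
    also have "\<dots> = of_int i" using aut_of_nat[OF aut natK, of "nat (-i)"] False by simp
    finally show ?thesis .
  qed
  from r obtain i j where ij: "j > 0" "r = of_int i / of_int j" by (rule Rats_cases') auto
  have "\<tau> (of_int j * r) = \<tau> (of_int j) * \<tau> r" using aut_mult[OF aut K_rat[of "of_int j"] K_rat[OF r]] by simp
  moreover have "of_int j * r = of_int i" using ij by simp
  ultimately have "of_int j * \<tau> r = of_int i" using intc by simp
  hence "\<tau> r = of_int i / of_int j" using ij(1) by (simp add: field_simps)
  thus ?thesis using ij(2) by simp
qed

lemma aut_neg:
  assumes aut: "field_aut (triquad_field p q) \<tau>" and a: "a \<in> triquad_field p q"
  shows "\<tau> (-a) = - \<tau> a"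
proof -
  have "\<tau> (a + -a) = \<tau> a + \<tau> (-a)" using aut a K_neg by (intro aut_add) auto
  moreover have "\<tau> 0 = 0" using aut_rat[OF aut] by simp
  ultimately show ?thesis by simp
qed

lemma aut_scale:
  assumes aut: "field_aut (triquad_field p q) \<tau>" and "c \<in> \<rat>" "a \<in> triquad_field p q"
  shows "\<tau> (c * a) = c * \<tau> a"
  using aut_mult[OF aut K_rat[OF assms(2)] assms(3)] aut_rat[OF aut assms(2)] by simp

lemma aut_monos:
  assumes aut: "field_aut (triquad_field p q) \<tau>"
    and s: "\<tau> (sqrt 2) = \<sigma>s * sqrt 2" and P: "\<tau> (sqrt (real p)) = \<sigma>p * sqrt (real p)"
    and Q: "\<tau> (sqrt (real q)) = \<sigma>q * sqrt (real q)" and c: "c \<in> \<rat>"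
  shows "\<tau> (c * sqrt 2) = \<sigma>s * (c * sqrt 2)"
    and "\<tau> (c * sqrt (real p)) = \<sigma>p * (c * sqrt (real p))"
    and "\<tau> (c * sqrt (real q)) = \<sigma>q * (c * sqrt (real q))"
    and "\<tau> (c * (sqrt 2 * sqrt (real p))) = (\<sigma>s * \<sigma>p) * (c * (sqrt 2 * sqrt (real p)))"
    and "\<tau> (c * (sqrt 2 * sqrt (real q))) = (\<sigma>s * \<sigma>q) * (c * (sqrt 2 * sqrt (real q)))"
    and "\<tau> (c * (sqrt (real p) * sqrt (real q))) = (\<sigma>p * \<sigma>q) * (c * (sqrt (real p) * sqrt (real q)))"
    and "\<tau> (c * (sqrt 2 * sqrt (real p) * sqrt (real q))) = (\<sigma>s * \<sigma>p * \<sigma>q) * (c * (sqrt 2 * sqrt (real p) * sqrt (real q)))"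
proof -
  note sc = aut_scale[OF aut c]
  note m = aut_mult[OF aut]
  show "\<tau> (c * sqrt 2) = \<sigma>s * (c * sqrt 2)" using sc[OF K_s] s by simp
  show "\<tau> (c * sqrt (real p)) = \<sigma>p * (c * sqrt (real p))" using sc[OF K_P] P by simp
  show "\<tau> (c * sqrt (real q)) = \<sigma>q * (c * sqrt (real q))" using sc[OF K_Q] Q by simp
  show "\<tau> (c * (sqrt 2 * sqrt (real p))) = (\<sigma>s * \<sigma>p) * (c * (sqrt 2 * sqrt (real p)))"
    using sc[OF K_sP] m[OF K_s K_P] s P by simp
  show "\<tau> (c * (sqrt 2 * sqrt (real q))) = (\<sigma>s * \<sigma>q) * (c * (sqrt 2 * sqrt (real q)))"
    using sc[OF K_sQ] m[OF K_s K_Q] s Q by simp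
  show "\<tau> (c * (sqrt (real p) * sqrt (real q))) = (\<sigma>p * \<sigma>q) * (c * (sqrt (real p) * sqrt (real q)))"
    using sc[OF K_PQ] m[OF K_P K_Q] P Q by simp
  show "\<tau> (c * (sqrt 2 * sqrt (real p) * sqrt (real q))) = (\<sigma>s * \<sigma>p * \<sigma>q) * (c * (sqrt 2 * sqrt (real p) * sqrt (real q)))"
    using sc[OF K_sPQ] m[OF K_sP K_Q] m[OF K_s K_P] s P Q by simp
qed

definition Fsg :: "real \<Rightarrow> real \<Rightarrow> real \<Rightarrow> real" where
  "Fsg e a b = (if a = 1 \<and> b = 1 then e else if a = -1 \<and> b = -1 then -e else if a = 1 then 1 else -1)"

lemma T_gen:
  fixes K :: "real set"
  assumes a1: "field_aut (triquad_field p q) \<tau>1" and a2: "field_aut (triquad_field p q) \<tau>2"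
    and a3: "field_aut (triquad_field p q) \<tau>3"
    and UK: "U \<in> triquad_field p q" and WK: "W \<in> triquad_field p q"
    and s1: "\<tau>1 U = u1 * U" "\<tau>1 W = w1 * W"
    and s2: "\<tau>2 U = u2 * U" "\<tau>2 W = w2 * W"
    and s3: "\<tau>3 U = u3 * U" "\<tau>3 W = w3 * W"
    and sg: "u1 \<in> {1,-1}" "u2 \<in> {1,-1}" "u3 \<in> {1,-1}" "w1 \<in> {1,-1}" "w2 \<in> {1,-1}" "w3 \<in> {1,-1}"
    and UW: "U^2 - W^2 = 1" and e: "e = (U + W)^2" and eta: "\<eta>^2 = e"
  shows "(\<eta> * \<tau>2 \<eta>, \<eta> * \<tau>1 (\<tau>2 \<eta>), \<eta> * \<tau>1 (\<tau>3 \<eta>), \<eta> * \<tau>2 (\<tau>3 \<eta>), \<eta> * \<tau>1 \<eta>)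
       = (Fsg e u2 w2, Fsg e (u1*u2) (w1*w2), Fsg e (u1*u3) (w1*w3), Fsg e (u2*u3) (w2*w3), Fsg e u1 w1)"
proof -
  let ?K = "triquad_field p q"
  have Frule: "(U + W) * (a * U + b * W) = Fsg e a b" if "a \<in> {1,-1}" "b \<in> {1,-1}" for a b
    using that UW e unfolding Fsg_def by (auto simp: algebra_simps power2_eq_square)
  have lin: "\<tau> (a * U + b * W) = (a * ua) * U + (b * wa) * W"
    if "field_aut ?K \<tau>" "\<tau> U = ua * U" "\<tau> W = wa * W" "a \<in> {1,-1}" "b \<in> {1,-1}" for \<tau> a b ua wa
  proof -
    have aQ: "a \<in> \<rat>" "b \<in> \<rat>" using that(4,5) by auto
    have "\<tau> (a * U + b * W) = \<tau> (a * U) + \<tau> (b * W)"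
      using that(1) K_scale[OF aQ(1) UK] K_scale[OF aQ(2) WK] by (rule aut_add)
    also have "\<dots> = a * \<tau> U + b * \<tau> W" using aut_scale[OF that(1) aQ(1) UK] aut_scale[OF that(1) aQ(2) WK] by simp
    finally show ?thesis using that(2,3) by simp
  qed
  have inK: "a * U + b * W \<in> ?K" if "a \<in> {1,-1}" "b \<in> {1,-1}" for a b
    using that by (intro K_add K_scale UK WK) auto
  have "\<eta> = U + W \<or> \<eta> = -(U + W)" using eta e by (metis power2_eq_iff)
  then obtain c where c: "c \<in> {1,-1}" "\<eta> = c * U + c * W"
  proof
    assume "\<eta> = U + W" thus thesis using that[of 1] by simp
  next
    assume "\<eta> = -(U + W)" thus thesis using that[of "-1"] by simp
  qed
  have cc: "c * c = 1" using c(1) by auto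
  have sgm: "x * y \<in> {1,-1}" if "x \<in> {1,-1}" "y \<in> {1,-1}" for x y :: real using that by auto
  have H: "(c*U + c*W)*(a'*U + b'*W) = (U+W)*(a*U+b*W)" if "a' = c*a" "b' = c*b" for a b a' b'
  proof -
    have "(c*U + c*W)*(a'*U + b'*W) = (c*c)*((U+W)*(a*U+b*W))" unfolding that by (simp add: algebra_simps)
    thus ?thesis using cc by simp
  qed
  have E1: "\<eta> * \<tau>2 \<eta> = Fsg e u2 w2"
    unfolding c(2) lin[OF a2 s2 c(1) c(1)] using Frule[OF sg(2) sg(5)] H[of "c*u2" u2 "c*w2" w2] by simp
  have E2: "\<eta> * \<tau>1 (\<tau>2 \<eta>) = Fsg e (u1*u2) (w1*w2)"
    unfolding c(2) lin[OF a2 s2 c(1) c(1)] lin[OF a1 s1 sgm[OF c(1) sg(2)] sgm[OF c(1) sg(5)]]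
    using Frule[OF sgm[OF sg(1) sg(2)] sgm[OF sg(4) sg(5)]] H[of "c*u2*u1" "u1*u2" "c*w2*w1" "w1*w2"]
    by (simp add: ac_simps)
  have E3: "\<eta> * \<tau>1 (\<tau>3 \<eta>) = Fsg e (u1*u3) (w1*w3)"
    unfolding c(2) lin[OF a3 s3 c(1) c(1)] lin[OF a1 s1 sgm[OF c(1) sg(3)] sgm[OF c(1) sg(6)]]
    using Frule[OF sgm[OF sg(1) sg(3)] sgm[OF sg(4) sg(6)]] H[of "c*u3*u1" "u1*u3" "c*w3*w1" "w1*w3"]
    by (simp add: ac_simps)
  have E4: "\<eta> * \<tau>2 (\<tau>3 \<eta>) = Fsg e (u2*u3) (w2*w3)"
    unfolding c(2) lin[OF a3 s3 c(1) c(1)] lin[OF a2 s2 sgm[OF c(1) sg(3)] sgm[OF c(1) sg(6)]]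
    using Frule[OF sgm[OF sg(2) sg(3)] sgm[OF sg(5) sg(6)]] H[of "c*u3*u2" "u2*u3" "c*w3*w2" "w2*w3"]
    by (simp add: ac_simps)
  have E5: "\<eta> * \<tau>1 \<eta> = Fsg e u1 w1"
    unfolding c(2) lin[OF a1 s1 c(1) c(1)] using Frule[OF sg(1) sg(4)] H[of "c*u1" u1 "c*w1" w1] by simp
  show ?thesis using E1 E2 E3 E4 E5 by simp
qed

lemma not_sq:
  fixes r d :: nat
  assumes "prime r" "r dvd d" "\<not> r^2 dvd d"
  shows "sqrt (real d) \<notin> \<rat>"
proof
  assume "sqrt (real d) \<in> \<rat>"
  then obtain m where m: "d = m^2" using sqrt_rat_square by blast
  hence "r dvd m" using assms prime_dvd_power by blast
  hence "r^2 dvd m^2" by simp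
  thus False using assms m by simp
qed

lemma no_neg_pell:
  fixes q d :: nat and x y :: int
  assumes q: "prime q" "q mod 4 = 3" "q dvd d"
  shows "x^2 - int d * y^2 \<noteq> -1"
proof
  assume eq: "x^2 - int d * y^2 = -1"
  have qd: "int q dvd int d" using q(3) by simp
  have c1: "[x^2 = -1] (mod int q)"
  proof -
    have "x^2 - (-1) = int d * y^2" using eq by simp
    hence "int q dvd x^2 - (-1)" using qd by simp
    thus ?thesis by (simp add: cong_iff_dvd_diff)
  qed
  define m where "m = nat \<bar>x\<bar>"
  have mx: "(int m)^2 = x^2" unfolding m_def by simp
  have ndvd: "\<not> q dvd m"
  proof
    assume "q dvd m"
    hence "int q dvd int m" by simp
    hence "int q dvd (int m)^2" by (metis dvd_mult2 power2_eq_square)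
    hence "int q dvd x^2" using mx by simp
    moreover have "int q dvd x^2 + 1" using c1 by (simp add: cong_iff_dvd_diff)
    ultimately have "int q dvd 1" by (metis add_diff_cancel_left' dvd_diff)
    thus False using q(1) by (simp add: prime_gt_1_nat)
  qed
  have "[m ^ (q - 1) = 1] (mod q)" using fermat_theorem[OF q(1) ndvd] .
  hence f: "[int m ^ (q - 1) = 1] (mod int q)" using cong_int_iff by (metis of_nat_1 of_nat_power)
  define k where "k = (q - 1) div 2"
  have qk: "q - 1 = 2 * k" and kodd: "odd k" using q(2) unfolding k_def by presburger+
  have "int m ^ (q - 1) = (x^2)^k" unfolding qk using mx by (simp add: power_mult)
  moreover have "[(x^2)^k = (-1)^k] (mod int q)" using c1 by (rule cong_pow)
  moreover have "(-1::int)^k = -1" using kodd by simp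
  ultimately have "[int m ^ (q - 1) = -1] (mod int q)" by simp
  hence "[1 = -1] (mod int q)" using f by (metis cong_sym cong_trans)
  hence "int q dvd 2" by (simp add: cong_iff_dvd_diff)
  hence "q dvd 2" by presburger
  hence "q \<le> 2" by (simp add: dvd_imp_le)
  thus False using q(2) by simp
qed

lemma eps_facts:
  fixes d :: nat and x y :: int
  assumes irr: "sqrt (real d) \<notin> \<rat>" and noneg: "x^2 - int d * y^2 \<noteq> -1"
    and fu: "fund_unit d = real_of_int x + real_of_int y * sqrt (real d)"
  shows "x^2 - int d * y^2 = 1 \<and> x \<ge> 2 \<and> y \<ge> 1"
proof -
  have un: "quad_unit d (fund_unit d)" and g1: "fund_unit d > 1" using fund_unit_props[OF irr] by auto
  obtain a b where ab: "a \<in> \<rat>" "b \<in> \<rat>" "fund_unit d = a + b * sqrt (real d)"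
       "a^2 - real d * b^2 = 1 \<or> a^2 - real d * b^2 = -1"
    using unit_norm[OF irr un] by blast
  have by': "b = of_int y"
  proof (rule ccontr)
    assume ne: "b \<noteq> of_int y"
    have "(b - of_int y) * sqrt (real d) = of_int x - a" using ab(3) fu by (simp add: algebra_simps)
    hence "sqrt (real d) = (of_int x - a) / (b - of_int y)" using ne by (simp add: field_simps)
    moreover have "(of_int x - a) / (b - of_int y) \<in> \<rat>" using ab by simp
    ultimately show False using irr by simp
  qed
  hence ax: "a = of_int x" using ab(3) fu by simp
  have "real_of_int (x^2 - int d * y^2) = a^2 - real d * b^2" using ax by' by simp
  hence "x^2 - int d * y^2 = 1 \<or> x^2 - int d * y^2 = -1" using ab(4) by (metis of_int_eq_1_iff of_int_eq_iff of_int_minus of_int_1)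
  hence N1: "x^2 - int d * y^2 = 1" using noneg by blast
  hence N1r: "(real_of_int x)^2 - real d * (real_of_int y)^2 = 1" by (metis of_int_1 of_int_diff of_int_mult of_int_of_nat_eq of_int_power)
  define e where "e = fund_unit d"
  define e' where "e' = real_of_int x - real_of_int y * sqrt (real d)"
  have ss: "sqrt (real d) * sqrt (real d) = real d" by simp
  have "e * e' = 1" unfolding e_def e'_def fu using N1r by (simp add: algebra_simps power2_eq_square ss)
  hence e'v: "e' = 1/e" using g1 e_def by (simp add: field_simps)
  have e'01: "0 < e'" "e' < 1" using g1 e'v e_def by auto
  have dpos: "d > 0" using irr by (cases "d = 0") auto
  have "2 * (real_of_int y * sqrt (real d)) = e - e'" unfolding e_def e'_def fu by simp
  hence "real_of_int y * sqrt (real d) > 0" using e'01 g1 e_def by simp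
  hence ypos: "y > 0" using dpos by (simp add: zero_less_mult_iff)
  have "2 * real_of_int x = e + e'" unfolding e_def e'_def fu by simp
  hence "x > 0" using e'01 g1 e_def by simp
  moreover have "x \<noteq> 1"
  proof
    assume "x = 1"
    hence "int d * y^2 = 0" using N1 by simp
    thus False using dpos ypos by simp
  qed
  ultimately show ?thesis using N1 ypos by auto
qed

lemma sq_decomp:
  fixes A B m c :: nat
  assumes cop: "coprime A B" and eq: "A * B = m * c^2"
  shows "\<exists>g a. g dvd m \<and> A = g * a^2"
proof (cases "A = 0 \<or> B = 0 \<or> m = 0")
  case True
  show ?thesis
  proof (cases "A = 0")
    case True thus ?thesis by (rule_tac x=m in exI, rule_tac x=0 in exI) simp
  next
    case False
    hence "B = 0 \<or> m = 0" using True by simp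
    hence "B = 0" using eq False by auto
    hence "A = 1" using cop by simp
    thus ?thesis by (rule_tac x=1 in exI, rule_tac x=1 in exI) simp
  qed
next
  case False
  hence nz: "A > 0" "B > 0" "m > 0" by auto
  define g where "g = gcd A m"
  have gpos: "g > 0" unfolding g_def using nz by simp
  define A1 where "A1 = A div g"
  define m1 where "m1 = m div g"
  have A: "A = g * A1" unfolding A1_def g_def by simp
  have m: "m = g * m1" unfolding m1_def g_def by simp
  have cop1: "coprime A1 m1" unfolding A1_def m1_def g_def using nz by (intro div_gcd_coprime) auto
  have "g * (A1 * B) = g * (m1 * c^2)" using eq A m by (simp add: ac_simps)
  hence e1: "A1 * B = m1 * c^2" using gpos by simp
  have "A1 * (B * m1) = (m1 * c)^2" using e1 by (simp add: power2_eq_square ac_simps)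
  moreover have "coprime A1 (B * m1)"
  proof -
    have "coprime A1 B" using cop A by (metis coprime_mult_left_iff)
    thus ?thesis using cop1 by simp
  qed
  moreover have "A1 > 0" using A nz by (metis mult_0_right not_gr0)
  moreover have "B * m1 > 0" using nz m by (metis mult_0_right mult_pos_pos not_gr0)
  ultimately have "is_nth_power 2 A1" using is_nth_power_mult_coprime_natD(1)[of A1 "B*m1" 2]
    by (metis is_nth_powerI)
  then obtain a where "A1 = a^2" by (auto elim: is_nth_powerE)
  thus ?thesis using A m by (rule_tac x=g in exI, rule_tac x=a in exI) simp
qed

lemma dvd_prime_cases: "prime (r::nat) \<Longrightarrow> a dvd r \<Longrightarrow> a = 1 \<or> a = r"
  using prime_nat_iff by blast

lemma div_2pq_K:
  fixes p q g :: nat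
  assumes p: "prime p" and q: "prime q" and g: "g dvd 2*p*q"
  shows "sqrt (real g) \<in> triquad_field p q"
proof -
  obtain g1 h where gh: "g = g1 * h" "g1 dvd 2*p" "h dvd q" using division_decomp[OF g] by blast
  obtain a b where ab: "g1 = a * b" "a dvd 2" "b dvd p" using division_decomp[OF gh(2)] by blast
  have a: "a = 1 \<or> a = 2" using dvd_prime_cases[OF two_is_prime_nat ab(2)] .
  have b: "b = 1 \<or> b = p" using dvd_prime_cases[OF p ab(3)] .
  have h: "h = 1 \<or> h = q" using dvd_prime_cases[OF q gh(3)] .
  have e: "sqrt (real g) = sqrt (real a) * sqrt (real b) * sqrt (real h)"
    unfolding gh(1) ab(1) by (simp add: real_sqrt_mult)
  show ?thesis unfolding e using a b h
    by (auto simp: K_s K_P K_Q K_sP K_sQ K_PQ K_sPQ K_rat)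
qed

lemma div_pq_K:
  fixes p q g :: nat
  assumes p: "prime p" and q: "prime q" and g: "g dvd p*q"
  shows "sqrt 2 * sqrt (real g) \<in> triquad_field p q"
proof -
  obtain b h where bh: "g = b * h" "b dvd p" "h dvd q" using division_decomp[OF g] by blast
  have b: "b = 1 \<or> b = p" using dvd_prime_cases[OF p bh(2)] .
  have h: "h = 1 \<or> h = q" using dvd_prime_cases[OF q bh(3)] .
  have e: "sqrt 2 * sqrt (real g) = sqrt 2 * sqrt (real b) * sqrt (real h)"
    unfolding bh(1) by (simp add: real_sqrt_mult)
  show ?thesis unfolding e using b h
    by (auto simp: K_s K_P K_Q K_sP K_sQ K_PQ K_sPQ K_rat)
qed

lemma sqrtA_K:
  fixes A B m c :: nat
  assumes p: "prime p" and q: "prime q" and cop: "coprime A B" and eq: "A * B = m * c^2"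
    and m: "m dvd 2*p*q"
  shows "sqrt (real A) \<in> triquad_field p q"
proof -
  obtain g a where ga: "g dvd m" "A = g * a^2" using sq_decomp[OF cop eq] by blast
  have "sqrt (real A) = real a * sqrt (real g)" unfolding ga(2) by (simp add: real_sqrt_mult)
  moreover have "sqrt (real g) \<in> triquad_field p q" using div_2pq_K[OF p q] ga(1) m dvd_trans by blast
  ultimately show ?thesis using K_scale[of "real a" "sqrt (real g)"] by simp
qed

lemma sqrt2A_K:
  fixes A B m c :: nat
  assumes p: "prime p" and q: "prime q" and cop: "coprime A B" and eq: "A * B = m * c^2"
    and m: "m dvd p*q"
  shows "sqrt 2 * sqrt (real A) \<in> triquad_field p q"
proof -
  obtain g a where ga: "g dvd m" "A = g * a^2" using sq_decomp[OF cop eq] by blast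
  have e: "sqrt 2 * sqrt (real A) = real a * (sqrt 2 * sqrt (real g))" unfolding ga(2) by (simp add: real_sqrt_mult)
  have "sqrt 2 * sqrt (real g) \<in> triquad_field p q" using div_pq_K[OF p q] ga(1) m dvd_trans by blast
  hence "real a * (sqrt 2 * sqrt (real g)) \<in> triquad_field p q" by (rule K_scale[rotated]) simp
  thus ?thesis unfolding e .
qed

lemma odd_pq: "prime (p::nat) \<Longrightarrow> prime q \<Longrightarrow> p mod 8 = 1 \<Longrightarrow> q mod 8 = 3 \<Longrightarrow> odd (int p * int q)"
  by simp presburger

lemma sqrt_consec:
  fixes k z :: int and M :: nat
  assumes k: "k \<ge> 0" and z: "z \<ge> 0" and eq: "k * (k+1) = int M * z^2"
  shows "(sqrt (real_of_int (k+1)) + sqrt (real_of_int k))^2 = (2*k+1) + 2 * z * sqrt (real M)"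
proof -
  have "sqrt (real_of_int (k+1)) * sqrt (real_of_int k) = sqrt (real_of_int (k*(k+1)))"
    by (simp add: real_sqrt_mult[symmetric] algebra_simps)
  also have "\<dots> = sqrt (real M * (real_of_int z)^2)" unfolding eq by simp
  also have "\<dots> = real_of_int z * sqrt (real M)" using z by (simp add: real_sqrt_mult)
  finally have m: "sqrt (real_of_int (k+1)) * sqrt (real_of_int k) = real_of_int z * sqrt (real M)" .
  have "(sqrt (real_of_int (k+1)) + sqrt (real_of_int k))^2
        = (sqrt (real_of_int (k+1)))^2 + (sqrt (real_of_int k))^2 + 2 * (sqrt (real_of_int (k+1)) * sqrt (real_of_int k))"
    by (simp add: power2_eq_square algebra_simps)
  also have "\<dots> = (2*k+1) + 2 * z * sqrt (real M)" using k m by simp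
  finally show ?thesis .
qed

lemma exist_2pq:
  fixes p q :: nat and x y :: int
  assumes p: "prime p" and q: "prime q" and p8: "p mod 8 = 1" and q8: "q mod 8 = 3"
    and eq: "x^2 - int (2*p*q) * y^2 = 1" and x2: "x \<ge> 2" and y1: "y \<ge> 1"
  shows "\<exists>\<eta>\<in>triquad_field p q. \<eta>^2 = real_of_int x + real_of_int y * sqrt (real (2*p*q))"
proof -
  have "x^2 = 1 + 2 * (int p * int q * y^2)" using eq by simp
  hence "odd (x^2)" by simp
  hence "odd x" by simp
  then obtain k where k: "x = 2*k + 1" by (metis oddE)
  have kpos: "k \<ge> 0" using k x2 by simp
  have e1: "2 * (k * (k+1)) = int p * int q * y^2"
  proof -
    have "(2*k+1)^2 - 1 = 2 * (int p * int q * y^2)" using eq k by simp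
    thus ?thesis by (simp add: power2_eq_square algebra_simps)
  qed
  have "even (int p * int q * y^2)" using e1 by (metis dvd_triv_left)
  hence "even (y^2)" using odd_pq[OF p q p8 q8] by simp
  hence "even y" by simp
  then obtain z where z: "y = 2*z" by (metis evenE)
  have zpos: "z \<ge> 0" using z y1 by simp
  have e2: "k * (k+1) = int (2*p*q) * z^2" using e1 z by (simp add: power2_eq_square algebra_simps)
  define A where "A = nat (k+1)"
  define B where "B = nat k"
  have AB: "int A = k + 1" "int B = k" unfolding A_def B_def using kpos by auto
  have cop: "coprime A B" unfolding A_def B_def using kpos
    by (metis AB(1) AB(2) add.commute coprime_Suc_left_nat nat_int of_nat_Suc)
  have "int (A * B) = int ((2*p*q) * (nat z)^2)" using e2 AB zpos by (simp add: ac_simps)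
  hence eAB: "A * B = (2*p*q) * (nat z)^2" by (metis of_nat_eq_iff)
  have eBA: "B * A = (2*p*q) * (nat z)^2" using eAB by (simp add: ac_simps)
  have KA: "sqrt (real A) \<in> triquad_field p q" using sqrtA_K[OF p q cop eAB] by simp
  have KB: "sqrt (real B) \<in> triquad_field p q" using sqrtA_K[OF p q _ eBA] cop by (simp add: coprime_commute)
  have rA: "real A = real_of_int (k+1)" "real B = real_of_int k" using AB by (metis of_int_of_nat_eq)+
  have "(sqrt (real A) + sqrt (real B))^2 = (2*k+1) + 2 * z * sqrt (real (2*p*q))"
    unfolding rA using sqrt_consec[OF kpos zpos e2] by simp
  also have "\<dots> = real_of_int x + real_of_int y * sqrt (real (2*p*q))" using k z by simp
  finally show ?thesis using K_add[OF KA KB] by blast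
qed

lemma exist_pq:
  fixes p q :: nat and v w :: int
  assumes p: "prime p" and q: "prime q" and p8: "p mod 8 = 1" and q8: "q mod 8 = 3"
    and eq: "v^2 - int (p*q) * w^2 = 1" and v2: "v \<ge> 2" and w1: "w \<ge> 1"
  shows "\<exists>\<eta>\<in>triquad_field p q. \<eta>^2 = real_of_int v + real_of_int w * sqrt (real (p*q))"
proof (cases "odd v")
  case True
  then obtain k where k: "v = 2*k + 1" by (metis oddE)
  have kpos: "k \<ge> 0" using k v2 by simp
  have e1: "4 * (k * (k+1)) = int p * int q * w^2"
  proof -
    have "(2*k+1)^2 - 1 = int p * int q * w^2" using eq k by simp
    thus ?thesis by (simp add: power2_eq_square algebra_simps)
  qed
  have "even (int p * int q * w^2)" using e1 by (metis dvd_triv_left even_mult_iff even_numeral)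
  hence "even (w^2)" using odd_pq[OF p q p8 q8] by simp
  hence "even w" by simp
  then obtain z where z: "w = 2*z" by (metis evenE)
  have zpos: "z \<ge> 0" using z w1 by simp
  have e2: "k * (k+1) = int (p*q) * z^2" using e1 z by (simp add: power2_eq_square algebra_simps)
  define A where "A = nat (k+1)"
  define B where "B = nat k"
  have AB: "int A = k + 1" "int B = k" unfolding A_def B_def using kpos by auto
  have cop: "coprime A B" unfolding A_def B_def using kpos
    by (metis AB(1) AB(2) add.commute coprime_Suc_left_nat nat_int of_nat_Suc)
  have "int (A * B) = int ((p*q) * (nat z)^2)" using e2 AB zpos by (simp add: ac_simps)
  hence eAB: "A * B = (p*q) * (nat z)^2" by (metis of_nat_eq_iff)
  have eBA: "B * A = (p*q) * (nat z)^2" using eAB by (simp add: ac_simps)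
  have m: "p*q dvd 2*p*q" by simp
  have KA: "sqrt (real A) \<in> triquad_field p q" using sqrtA_K[OF p q cop eAB m] by simp
  have KB: "sqrt (real B) \<in> triquad_field p q" using sqrtA_K[OF p q _ eBA m] cop by (simp add: coprime_commute)
  have rA: "real A = real_of_int (k+1)" "real B = real_of_int k" using AB by (metis of_int_of_nat_eq)+
  have "(sqrt (real A) + sqrt (real B))^2 = (2*k+1) + 2 * z * sqrt (real (p*q))"
    unfolding rA using sqrt_consec[OF kpos zpos e2] by simp
  also have "\<dots> = real_of_int v + real_of_int w * sqrt (real (p*q))" using k z by simp
  finally show ?thesis using K_add[OF KA KB] by blast
next
  case False
  hence ev: "even v" by simp
  define A where "A = nat (v+1)"
  define B where "B = nat (v-1)"
  have AB: "int A = v + 1" "int B = v - 1" unfolding A_def B_def using v2 by auto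
  have cop: "coprime A B"
  proof -
    have "coprime (v+1) (v-1)"
    proof (rule coprimeI)
      fix c assume c: "c dvd v+1" "c dvd v-1"
      have "c dvd (v+1) - (v-1)" using c by (rule dvd_diff)
      hence c2: "c dvd 2" by simp
      have oc: "odd c"
      proof
        assume "even c"
        hence "even (v+1)" using c(1) dvd_trans by blast
        thus False using ev by simp
      qed
      have "\<bar>c\<bar> dvd 2" using c2 by simp
      hence "\<bar>c\<bar> \<le> 2" by (rule zdvd_imp_le) simp
      moreover have "odd \<bar>c\<bar>" using oc by simp
      ultimately have "\<bar>c\<bar> = 1" by presburger
      thus "is_unit c" by (simp add: zdvd1_eq)
    qed
    thus ?thesis using AB by (metis coprime_int_iff)
  qed
  have e1: "(v+1)*(v-1) = int (p*q) * w^2" using eq by (simp add: power2_eq_square algebra_simps)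
  have "int (A * B) = int ((p*q) * (nat w)^2)" using e1 AB w1 by (simp add: ac_simps)
  hence eAB: "A * B = (p*q) * (nat w)^2" by (metis of_nat_eq_iff)
  have eBA: "B * A = (p*q) * (nat w)^2" using eAB by (simp add: ac_simps)
  have KA: "sqrt 2 * sqrt (real A) \<in> triquad_field p q" using sqrt2A_K[OF p q cop eAB] by simp
  have KB: "sqrt 2 * sqrt (real B) \<in> triquad_field p q" using sqrt2A_K[OF p q _ eBA] cop by (simp add: coprime_commute)
  define \<eta> where "\<eta> = (1/2) * (sqrt 2 * sqrt (real A)) + (1/2) * (sqrt 2 * sqrt (real B))"
  have Keta: "\<eta> \<in> triquad_field p q" unfolding \<eta>_def using K_add[OF K_scale[OF _ KA] K_scale[OF _ KB], of "1/2" "1/2"] by simp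
  have rA: "real A = real_of_int v + 1" "real B = real_of_int v - 1" using AB by (metis of_int_of_nat_eq of_int_add of_int_1 of_int_diff)+
  have sAB: "sqrt (real A) * sqrt (real B) = real_of_int w * sqrt (real (p*q))"
  proof -
    have "sqrt (real A) * sqrt (real B) = sqrt (real (A*B))" by (simp add: real_sqrt_mult)
    also have "\<dots> = sqrt (real (p*q) * (real (nat w))^2)" unfolding eAB by simp
    also have "\<dots> = real (nat w) * sqrt (real (p*q))" by (simp add: real_sqrt_mult)
    finally show ?thesis using w1 by simp
  qed
  have "\<eta>^2 = (1/2) * ((sqrt (real A))^2 + (sqrt (real B))^2 + 2 * (sqrt (real A) * sqrt (real B)))"
    unfolding \<eta>_def by (simp add: power2_eq_square algebra_simps)
  also have "\<dots> = real_of_int v + real_of_int w * sqrt (real (p*q))" unfolding sAB using rA by simp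
  finally show ?thesis using Keta by blast
qed

context
  fixes p q :: nat and \<tau>1 \<tau>2 \<tau>3 :: "real \<Rightarrow> real"
  assumes t1: "field_aut (triquad_field p q) \<tau>1" "\<tau>1 (sqrt 2) = - sqrt 2"
            "\<tau>1 (sqrt (real p)) = sqrt (real p)" "\<tau>1 (sqrt (real q)) = sqrt (real q)"
    and t2: "field_aut (triquad_field p q) \<tau>2" "\<tau>2 (sqrt 2) = sqrt 2"
            "\<tau>2 (sqrt (real p)) = - sqrt (real p)" "\<tau>2 (sqrt (real q)) = sqrt (real q)"
    and t3: "field_aut (triquad_field p q) \<tau>3" "\<tau>3 (sqrt 2) = sqrt 2"
            "\<tau>3 (sqrt (real p)) = sqrt (real p)" "\<tau>3 (sqrt (real q)) = - sqrt (real q)"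
begin

lemma M1: "c \<in> \<rat> \<Longrightarrow> \<tau>1 (c * sqrt 2) = (-1) * (c * sqrt 2)"
   "c \<in> \<rat> \<Longrightarrow> \<tau>1 (c * sqrt (real p)) = 1 * (c * sqrt (real p))"
   "c \<in> \<rat> \<Longrightarrow> \<tau>1 (c * sqrt (real q)) = 1 * (c * sqrt (real q))"
   "c \<in> \<rat> \<Longrightarrow> \<tau>1 (c * (sqrt 2 * sqrt (real p))) = (-1) * (c * (sqrt 2 * sqrt (real p)))"
   "c \<in> \<rat> \<Longrightarrow> \<tau>1 (c * (sqrt 2 * sqrt (real q))) = (-1) * (c * (sqrt 2 * sqrt (real q)))"
   "c \<in> \<rat> \<Longrightarrow> \<tau>1 (c * (sqrt (real p) * sqrt (real q))) = 1 * (c * (sqrt (real p) * sqrt (real q)))"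
   "c \<in> \<rat> \<Longrightarrow> \<tau>1 (c * (sqrt 2 * sqrt (real p) * sqrt (real q))) = (-1) * (c * (sqrt 2 * sqrt (real p) * sqrt (real q)))"
  using aut_monos[OF t1(1), of "-1" 1 1 c] t1 by simp_all

lemma M2: "c \<in> \<rat> \<Longrightarrow> \<tau>2 (c * sqrt 2) = 1 * (c * sqrt 2)"
   "c \<in> \<rat> \<Longrightarrow> \<tau>2 (c * sqrt (real p)) = (-1) * (c * sqrt (real p))"
   "c \<in> \<rat> \<Longrightarrow> \<tau>2 (c * sqrt (real q)) = 1 * (c * sqrt (real q))"
   "c \<in> \<rat> \<Longrightarrow> \<tau>2 (c * (sqrt 2 * sqrt (real p))) = (-1) * (c * (sqrt 2 * sqrt (real p)))"
   "c \<in> \<rat> \<Longrightarrow> \<tau>2 (c * (sqrt 2 * sqrt (real q))) = 1 * (c * (sqrt 2 * sqrt (real q)))"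
   "c \<in> \<rat> \<Longrightarrow> \<tau>2 (c * (sqrt (real p) * sqrt (real q))) = (-1) * (c * (sqrt (real p) * sqrt (real q)))"
   "c \<in> \<rat> \<Longrightarrow> \<tau>2 (c * (sqrt 2 * sqrt (real p) * sqrt (real q))) = (-1) * (c * (sqrt 2 * sqrt (real p) * sqrt (real q)))"
  using aut_monos[OF t2(1), of 1 "-1" 1 c] t2 by simp_all

lemma M3: "c \<in> \<rat> \<Longrightarrow> \<tau>3 (c * sqrt 2) = 1 * (c * sqrt 2)"
   "c \<in> \<rat> \<Longrightarrow> \<tau>3 (c * sqrt (real p)) = 1 * (c * sqrt (real p))"
   "c \<in> \<rat> \<Longrightarrow> \<tau>3 (c * sqrt (real q)) = (-1) * (c * sqrt (real q))"
   "c \<in> \<rat> \<Longrightarrow> \<tau>3 (c * (sqrt 2 * sqrt (real p))) = 1 * (c * (sqrt 2 * sqrt (real p)))"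
   "c \<in> \<rat> \<Longrightarrow> \<tau>3 (c * (sqrt 2 * sqrt (real q))) = (-1) * (c * (sqrt 2 * sqrt (real q)))"
   "c \<in> \<rat> \<Longrightarrow> \<tau>3 (c * (sqrt (real p) * sqrt (real q))) = (-1) * (c * (sqrt (real p) * sqrt (real q)))"
   "c \<in> \<rat> \<Longrightarrow> \<tau>3 (c * (sqrt 2 * sqrt (real p) * sqrt (real q))) = (-1) * (c * (sqrt 2 * sqrt (real p) * sqrt (real q)))"
  using aut_monos[OF t3(1), of 1 1 "-1" c] t3 by simp_all

lemmas TG = T_gen[OF t1(1) t2(1) t3(1)]

lemma case1:
  fixes x y :: int and e \<eta> :: real
  assumes pp: "p > 0" and rel: "x^2 - int (2*p*q) * y^2 = 1" and x2: "x \<ge> 2" and y1: "y \<ge> 1"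
    and e: "e = real_of_int x + real_of_int y * sqrt (real (2*p*q))"
    and h: "is_nat_square (x - 1)" and eta: "\<eta>^2 = e"
  shows "(\<eta> * \<tau>2 \<eta>, \<eta> * \<tau>1 (\<tau>2 \<eta>), \<eta> * \<tau>1 (\<tau>3 \<eta>), \<eta> * \<tau>2 (\<tau>3 \<eta>), \<eta> * \<tau>1 \<eta>) = (-1, -e, -e, e, 1)"
proof -
  have pnz: "real p > 0" using pp by simp
  obtain n :: nat where n: "x - 1 = int n ^ 2" using h unfolding is_nat_square_def by blast
  define a where "a = real n"
  have a2: "a^2 = real_of_int x - 1"
  proof -
    have "real_of_int (x - 1) = a^2" unfolding a_def n by simp
    thus ?thesis by simp
  qed
  have xr: "real_of_int x \<ge> 2" using x2 by simp
  have xm: "real_of_int x - 1 \<noteq> 0" and xp: "real_of_int x + 1 \<noteq> 0" using xr by auto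
  have nz: "2 * real p * (real_of_int x + 1) \<noteq> 0" using pnz xp by simp
  have "a^2 > 0" unfolding a2 using xr pnz by simp
  hence "a \<noteq> 0" by auto
  hence apos: "a > 0" unfolding a_def by simp
  have relr: "(real_of_int x)^2 - real (2*p*q) * (real_of_int y)^2 = 1"
  proof -
    have "real_of_int (x^2 - int (2*p*q) * y^2) = 1" using rel by simp
    thus ?thesis by simp
  qed
  have K1h: "real_of_int y^2 * (real p * real q) = ((real_of_int x + 1) * (real_of_int x - 1)) / 2"
  proof -
    have "real (2*p*q) * (real_of_int y)^2 = 2 * (real_of_int y^2 * (real p * real q))" by (simp add: ac_simps)
    hence "2 * (real_of_int y^2 * (real p * real q)) = (real_of_int x)^2 - 1" using relr by linarith
    moreover have "(real_of_int x + 1) * (real_of_int x - 1) = (real_of_int x)^2 - 1" by (simp add: algebra_simps power2_eq_square)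
    ultimately show ?thesis by simp
  qed
  define c1 where "c1 = real_of_int y / a"
  define c2 where "c2 = a / 2"
  have c1Q: "c1 \<in> \<rat>" and c2Q: "c2 \<in> \<rat>" unfolding c1_def c2_def a_def by simp_all
  define U where "U = c1 * (sqrt (real p) * sqrt (real q))"
  define W where "W = c2 * sqrt 2"
  have UK: "U \<in> triquad_field p q" unfolding U_def by (rule K_scale[OF c1Q K_PQ])
  have WK: "W \<in> triquad_field p q" unfolding W_def by (rule K_scale[OF c2Q K_s])
  have U2: "U^2 = (real_of_int x + 1) / 2"
  proof -
    have "U^2 = real_of_int y^2 * (real p * real q) / a^2" unfolding U_def c1_def power_mult_distrib
      using apos pnz by (simp add: power_divide field_simps power2_eq_square)
    also have "\<dots> = ((real_of_int x + 1) * (real_of_int x - 1)) / 2 / (real_of_int x - 1)" unfolding a2 K1h by simp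
    also have "\<dots> = (real_of_int x + 1) / 2" using xm xp apos pnz a2 by (simp add: field_simps power2_eq_square)
    finally show ?thesis .
  qed
  have W2: "W^2 = (real_of_int x - 1) / 2"
  proof -
    have "W^2 = a^2 / 2" unfolding W_def c2_def power_mult_distrib
      using apos pnz by (simp add: power_divide field_simps power2_eq_square)
    also have "\<dots> = (real_of_int x - 1) / 2" using xm xp apos pnz a2 by (simp add: field_simps power2_eq_square)
    finally show ?thesis .
  qed
  have cc: "2 * c1 * c2 = real_of_int y" unfolding c1_def c2_def using apos pnz by (simp add: field_simps)
  have UW: "2 * U * W = real_of_int y * (sqrt 2 * sqrt (real p) * sqrt (real q))"
  proof -
    have "2 * U * W = (2 * c1 * c2) * (sqrt 2 * sqrt (real p) * sqrt (real q))" unfolding U_def W_def by (simp only: mult_ac)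
    thus ?thesis unfolding cc .
  qed
  have sD: "sqrt (real (2*p*q)) = sqrt 2 * sqrt (real p) * sqrt (real q)" by (simp add: real_sqrt_mult)
  have ee: "e = (U + W)^2"
    unfolding e power2_sum U2 W2 UW sD by (simp add: field_simps)
  have "(\<eta> * \<tau>2 \<eta>, \<eta> * \<tau>1 (\<tau>2 \<eta>), \<eta> * \<tau>1 (\<tau>3 \<eta>), \<eta> * \<tau>2 (\<tau>3 \<eta>), \<eta> * \<tau>1 \<eta>)
       = (Fsg e (-1) 1, Fsg e (1*(-1)) ((-1)*1), Fsg e (1*(-1)) ((-1)*1), Fsg e ((-1)*(-1)) (1*1), Fsg e 1 (-1))"
    by (rule TG[OF UK WK]) (use M1[OF c1Q] M1[OF c2Q] M2[OF c1Q] M2[OF c2Q] M3[OF c1Q] M3[OF c2Q] U2 W2 ee eta in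
        \<open>auto simp: U_def W_def\<close>)
  thus ?thesis by (simp add: Fsg_def)
qed

lemma case2:
  fixes x y :: int and e \<eta> :: real
  assumes pp: "p > 0" and rel: "x^2 - int (2*p*q) * y^2 = 1" and x2: "x \<ge> 2" and y1: "y \<ge> 1"
    and e: "e = real_of_int x + real_of_int y * sqrt (real (2*p*q))"
    and h: "is_nat_square (int p * (x - 1))" and eta: "\<eta>^2 = e"
  shows "(\<eta> * \<tau>2 \<eta>, \<eta> * \<tau>1 (\<tau>2 \<eta>), \<eta> * \<tau>1 (\<tau>3 \<eta>), \<eta> * \<tau>2 (\<tau>3 \<eta>), \<eta> * \<tau>1 \<eta>) = (1, e, -e, -e, 1)"
proof -
  have pnz: "real p > 0" using pp by simp
  obtain n :: nat where n: "int p * (x - 1) = int n ^ 2" using h unfolding is_nat_square_def by blast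
  define a where "a = real n"
  have a2: "a^2 = real p * (real_of_int x - 1)"
  proof -
    have "real_of_int (int p * (x - 1)) = a^2" unfolding a_def n by simp
    thus ?thesis by simp
  qed
  have xr: "real_of_int x \<ge> 2" using x2 by simp
  have xm: "real_of_int x - 1 \<noteq> 0" and xp: "real_of_int x + 1 \<noteq> 0" using xr by auto
  have nz: "2 * real p * (real_of_int x + 1) \<noteq> 0" using pnz xp by simp
  have "a^2 > 0" unfolding a2 using xr pnz by simp
  hence "a \<noteq> 0" by auto
  hence apos: "a > 0" unfolding a_def by simp
  have relr: "(real_of_int x)^2 - real (2*p*q) * (real_of_int y)^2 = 1"
  proof -
    have "real_of_int (x^2 - int (2*p*q) * y^2) = 1" using rel by simp
    thus ?thesis by simp
  qed
  have K1h: "real_of_int y^2 * (real p * real q) = ((real_of_int x + 1) * (real_of_int x - 1)) / 2"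
  proof -
    have "real (2*p*q) * (real_of_int y)^2 = 2 * (real_of_int y^2 * (real p * real q))" by (simp add: ac_simps)
    hence "2 * (real_of_int y^2 * (real p * real q)) = (real_of_int x)^2 - 1" using relr by linarith
    moreover have "(real_of_int x + 1) * (real_of_int x - 1) = (real_of_int x)^2 - 1" by (simp add: algebra_simps power2_eq_square)
    ultimately show ?thesis by simp
  qed
  define c1 where "c1 = real p * real_of_int y / a"
  define c2 where "c2 = a / (2 * real p)"
  have c1Q: "c1 \<in> \<rat>" and c2Q: "c2 \<in> \<rat>" unfolding c1_def c2_def a_def by simp_all
  define U where "U = c1 * sqrt (real q)"
  define W where "W = c2 * (sqrt 2 * sqrt (real p))"
  have UK: "U \<in> triquad_field p q" unfolding U_def by (rule K_scale[OF c1Q K_Q])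
  have WK: "W \<in> triquad_field p q" unfolding W_def by (rule K_scale[OF c2Q K_sP])
  have U2: "U^2 = (real_of_int x + 1) / 2"
  proof -
    have "U^2 = real p * (real_of_int y^2 * (real p * real q)) / a^2" unfolding U_def c1_def power_mult_distrib
      using apos pnz by (simp add: power_divide field_simps power2_eq_square)
    also have "\<dots> = real p * (((real_of_int x + 1) * (real_of_int x - 1)) / 2) / (real p * (real_of_int x - 1))" unfolding a2 K1h by simp
    also have "\<dots> = (real_of_int x + 1) / 2" using xm xp apos pnz a2 by (simp add: field_simps power2_eq_square)
    finally show ?thesis .
  qed
  have W2: "W^2 = (real_of_int x - 1) / 2"
  proof -
    have "W^2 = a^2 / (2 * real p)" unfolding W_def c2_def power_mult_distrib
      using apos pnz by (simp add: power_divide field_simps power2_eq_square)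
    also have "\<dots> = real p * (real_of_int x - 1) / (2 * real p)" unfolding a2 K1h by simp
    also have "\<dots> = (real_of_int x - 1) / 2" using xm xp apos pnz a2 by (simp add: field_simps power2_eq_square)
    finally show ?thesis .
  qed
  have cc: "2 * c1 * c2 = real_of_int y" unfolding c1_def c2_def using apos pnz by (simp add: field_simps)
  have UW: "2 * U * W = real_of_int y * (sqrt 2 * sqrt (real p) * sqrt (real q))"
  proof -
    have "2 * U * W = (2 * c1 * c2) * (sqrt 2 * sqrt (real p) * sqrt (real q))" unfolding U_def W_def by (simp only: mult_ac)
    thus ?thesis unfolding cc .
  qed
  have sD: "sqrt (real (2*p*q)) = sqrt 2 * sqrt (real p) * sqrt (real q)" by (simp add: real_sqrt_mult)
  have ee: "e = (U + W)^2"
    unfolding e power2_sum U2 W2 UW sD by (simp add: field_simps)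
  have "(\<eta> * \<tau>2 \<eta>, \<eta> * \<tau>1 (\<tau>2 \<eta>), \<eta> * \<tau>1 (\<tau>3 \<eta>), \<eta> * \<tau>2 (\<tau>3 \<eta>), \<eta> * \<tau>1 \<eta>)
       = (Fsg e 1 (-1), Fsg e (1*1) ((-1)*(-1)), Fsg e (1*(-1)) ((-1)*1), Fsg e (1*(-1)) ((-1)*1), Fsg e 1 (-1))"
    by (rule TG[OF UK WK]) (use M1[OF c1Q] M1[OF c2Q] M2[OF c1Q] M2[OF c2Q] M3[OF c1Q] M3[OF c2Q] U2 W2 ee eta in
        \<open>auto simp: U_def W_def\<close>)
  thus ?thesis by (simp add: Fsg_def)
qed

lemma case3:
  fixes x y :: int and e \<eta> :: real
  assumes pp: "p > 0" and rel: "x^2 - int (2*p*q) * y^2 = 1" and x2: "x \<ge> 2" and y1: "y \<ge> 1"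
    and e: "e = real_of_int x + real_of_int y * sqrt (real (2*p*q))"
    and h: "is_nat_square (2 * int p * (x + 1))" and eta: "\<eta>^2 = e"
  shows "(\<eta> * \<tau>2 \<eta>, \<eta> * \<tau>1 (\<tau>2 \<eta>), \<eta> * \<tau>1 (\<tau>3 \<eta>), \<eta> * \<tau>2 (\<tau>3 \<eta>), \<eta> * \<tau>1 \<eta>) = (-1, -e, e, -e, 1)"
proof -
  have pnz: "real p > 0" using pp by simp
  obtain n :: nat where n: "2 * int p * (x + 1) = int n ^ 2" using h unfolding is_nat_square_def by blast
  define a where "a = real n"
  have a2: "a^2 = 2 * real p * (real_of_int x + 1)"
  proof -
    have "real_of_int (2 * int p * (x + 1)) = a^2" unfolding a_def n by simp
    thus ?thesis by simp
  qed
  have xr: "real_of_int x \<ge> 2" using x2 by simp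
  have xm: "real_of_int x - 1 \<noteq> 0" and xp: "real_of_int x + 1 \<noteq> 0" using xr by auto
  have nz: "2 * real p * (real_of_int x + 1) \<noteq> 0" using pnz xp by simp
  have "a^2 > 0" unfolding a2 using xr pnz by simp
  hence "a \<noteq> 0" by auto
  hence apos: "a > 0" unfolding a_def by simp
  have relr: "(real_of_int x)^2 - real (2*p*q) * (real_of_int y)^2 = 1"
  proof -
    have "real_of_int (x^2 - int (2*p*q) * y^2) = 1" using rel by simp
    thus ?thesis by simp
  qed
  have K1h: "real_of_int y^2 * (real p * real q) = ((real_of_int x + 1) * (real_of_int x - 1)) / 2"
  proof -
    have "real (2*p*q) * (real_of_int y)^2 = 2 * (real_of_int y^2 * (real p * real q))" by (simp add: ac_simps)
    hence "2 * (real_of_int y^2 * (real p * real q)) = (real_of_int x)^2 - 1" using relr by linarith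
    moreover have "(real_of_int x + 1) * (real_of_int x - 1) = (real_of_int x)^2 - 1" by (simp add: algebra_simps power2_eq_square)
    ultimately show ?thesis by simp
  qed
  define c1 where "c1 = a / (2 * real p)"
  define c2 where "c2 = real p * real_of_int y / a"
  have c1Q: "c1 \<in> \<rat>" and c2Q: "c2 \<in> \<rat>" unfolding c1_def c2_def a_def by simp_all
  define U where "U = c1 * sqrt (real p)"
  define W where "W = c2 * (sqrt 2 * sqrt (real q))"
  have UK: "U \<in> triquad_field p q" unfolding U_def by (rule K_scale[OF c1Q K_P])
  have WK: "W \<in> triquad_field p q" unfolding W_def by (rule K_scale[OF c2Q K_sQ])
  have U2: "U^2 = (real_of_int x + 1) / 2"
  proof -
    have "U^2 = a^2 / (4 * real p)" unfolding U_def c1_def power_mult_distrib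
      using apos pnz by (simp add: power_divide field_simps power2_eq_square)
    also have "\<dots> = 2 * real p * (real_of_int x + 1) / (4 * real p)" unfolding a2 K1h by simp
    also have "\<dots> = (real_of_int x + 1) / 2" using xm xp apos pnz a2 by (simp add: field_simps power2_eq_square)
    finally show ?thesis .
  qed
  have W2: "W^2 = (real_of_int x - 1) / 2"
  proof -
    have "W^2 = 2 * real p * (real_of_int y^2 * (real p * real q)) / a^2" unfolding W_def c2_def power_mult_distrib
      using apos pnz by (simp add: power_divide field_simps power2_eq_square)
    also have "\<dots> = 2 * real p * (((real_of_int x + 1) * (real_of_int x - 1)) / 2) / (2 * real p * (real_of_int x + 1))" unfolding a2 K1h by simp
    also have "\<dots> = (2 * real p * (real_of_int x + 1)) * (real_of_int x - 1) / ((2 * real p * (real_of_int x + 1)) * 2)" using nz by (simp add: field_simps)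
    also have "\<dots> = (real_of_int x - 1) / 2" using nz by (rule nonzero_mult_divide_mult_cancel_left)
    finally show ?thesis .
  qed
  have cc: "2 * c1 * c2 = real_of_int y" unfolding c1_def c2_def using apos pnz by (simp add: field_simps)
  have UW: "2 * U * W = real_of_int y * (sqrt 2 * sqrt (real p) * sqrt (real q))"
  proof -
    have "2 * U * W = (2 * c1 * c2) * (sqrt 2 * sqrt (real p) * sqrt (real q))" unfolding U_def W_def by (simp only: mult_ac)
    thus ?thesis unfolding cc .
  qed
  have sD: "sqrt (real (2*p*q)) = sqrt 2 * sqrt (real p) * sqrt (real q)" by (simp add: real_sqrt_mult)
  have ee: "e = (U + W)^2"
    unfolding e power2_sum U2 W2 UW sD by (simp add: field_simps)
  have "(\<eta> * \<tau>2 \<eta>, \<eta> * \<tau>1 (\<tau>2 \<eta>), \<eta> * \<tau>1 (\<tau>3 \<eta>), \<eta> * \<tau>2 (\<tau>3 \<eta>), \<eta> * \<tau>1 \<eta>)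
       = (Fsg e (-1) 1, Fsg e (1*(-1)) ((-1)*1), Fsg e (1*1) ((-1)*(-1)), Fsg e ((-1)*1) (1*(-1)), Fsg e 1 (-1))"
    by (rule TG[OF UK WK]) (use M1[OF c1Q] M1[OF c2Q] M2[OF c1Q] M2[OF c2Q] M3[OF c1Q] M3[OF c2Q] U2 W2 ee eta in
        \<open>auto simp: U_def W_def\<close>)
  thus ?thesis by (simp add: Fsg_def)
qed

lemma case4:
  fixes x y :: int and e \<eta> :: real
  assumes pp: "p > 0" and rel: "x^2 - int (p*q) * y^2 = 1" and x2: "x \<ge> 2" and y1: "y \<ge> 1"
    and e: "e = real_of_int x + real_of_int y * sqrt (real (p*q))"
    and h: "is_nat_square (x - 1)" and eta: "\<eta>^2 = e"
  shows "(\<eta> * \<tau>2 \<eta>, \<eta> * \<tau>1 (\<tau>2 \<eta>), \<eta> * \<tau>1 (\<tau>3 \<eta>), \<eta> * \<tau>2 (\<tau>3 \<eta>), \<eta> * \<tau>1 \<eta>) = (-1, 1, 1, e, -e)"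
proof -
  have pnz: "real p > 0" using pp by simp
  obtain n :: nat where n: "x - 1 = int n ^ 2" using h unfolding is_nat_square_def by blast
  define a where "a = real n"
  have a2: "a^2 = real_of_int x - 1"
  proof -
    have "real_of_int (x - 1) = a^2" unfolding a_def n by simp
    thus ?thesis by simp
  qed
  have xr: "real_of_int x \<ge> 2" using x2 by simp
  have xm: "real_of_int x - 1 \<noteq> 0" and xp: "real_of_int x + 1 \<noteq> 0" using xr by auto
  have nz: "2 * real p * (real_of_int x + 1) \<noteq> 0" using pnz xp by simp
  have "a^2 > 0" unfolding a2 using xr pnz by simp
  hence "a \<noteq> 0" by auto
  hence apos: "a > 0" unfolding a_def by simp
  have relr: "(real_of_int x)^2 - real (p*q) * (real_of_int y)^2 = 1"
  proof -
    have "real_of_int (x^2 - int (p*q) * y^2) = 1" using rel by simp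
    thus ?thesis by simp
  qed
  have K1h: "real_of_int y^2 * (real p * real q) = ((real_of_int x + 1) * (real_of_int x - 1)) / 1"
  proof -
    have "real (p*q) * (real_of_int y)^2 = 1 * (real_of_int y^2 * (real p * real q))" by (simp add: ac_simps)
    hence "1 * (real_of_int y^2 * (real p * real q)) = (real_of_int x)^2 - 1" using relr by linarith
    moreover have "(real_of_int x + 1) * (real_of_int x - 1) = (real_of_int x)^2 - 1" by (simp add: algebra_simps power2_eq_square)
    ultimately show ?thesis by simp
  qed
  define c1 where "c1 = real_of_int y / (2 * a)"
  define c2 where "c2 = a / 2"
  have c1Q: "c1 \<in> \<rat>" and c2Q: "c2 \<in> \<rat>" unfolding c1_def c2_def a_def by simp_all
  define U where "U = c1 * (sqrt 2 * sqrt (real p) * sqrt (real q))"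
  define W where "W = c2 * sqrt 2"
  have UK: "U \<in> triquad_field p q" unfolding U_def by (rule K_scale[OF c1Q K_sPQ])
  have WK: "W \<in> triquad_field p q" unfolding W_def by (rule K_scale[OF c2Q K_s])
  have U2: "U^2 = (real_of_int x + 1) / 2"
  proof -
    have "U^2 = real_of_int y^2 * (real p * real q) / (2 * a^2)" unfolding U_def c1_def power_mult_distrib
      using apos pnz by (simp add: power_divide field_simps power2_eq_square)
    also have "\<dots> = ((real_of_int x + 1) * (real_of_int x - 1)) / (2 * (real_of_int x - 1))" unfolding a2 K1h by simp
    also have "\<dots> = (real_of_int x + 1) / 2" using xm xp apos pnz a2 by (simp add: field_simps power2_eq_square)
    finally show ?thesis .
  qed
  have W2: "W^2 = (real_of_int x - 1) / 2"
  proof -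
    have "W^2 = a^2 / 2" unfolding W_def c2_def power_mult_distrib
      using apos pnz by (simp add: power_divide field_simps power2_eq_square)
    also have "\<dots> = (real_of_int x - 1) / 2" using xm xp apos pnz a2 by (simp add: field_simps power2_eq_square)
    finally show ?thesis .
  qed
  have mm: "(sqrt 2 * sqrt (real p) * sqrt (real q)) * sqrt 2 = 2 * (sqrt (real p) * sqrt (real q))"
  proof -
    have "(sqrt 2 * sqrt (real p) * sqrt (real q)) * sqrt 2 = (sqrt 2 * sqrt 2) * (sqrt (real p) * sqrt (real q))" by (simp only: mult_ac)
    also have "\<dots> = 2 * (sqrt (real p) * sqrt (real q))" by simp
    finally show ?thesis .
  qed
  have cc: "2 * c1 * c2 * 2 = real_of_int y" unfolding c1_def c2_def using apos pnz by (simp add: field_simps)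
  have UW: "2 * U * W = real_of_int y * (sqrt (real p) * sqrt (real q))"
  proof -
    have "2 * U * W = (2 * c1 * c2) * ((sqrt 2 * sqrt (real p) * sqrt (real q)) * sqrt 2)" unfolding U_def W_def by (simp only: mult_ac)
    also have "\<dots> = (2 * c1 * c2 * 2) * (sqrt (real p) * sqrt (real q))" unfolding mm by (simp only: mult_ac)
    finally show ?thesis unfolding cc .
  qed
  have sD: "sqrt (real (p*q)) = sqrt (real p) * sqrt (real q)" by (simp add: real_sqrt_mult)
  have ee: "e = (U + W)^2"
    unfolding e power2_sum U2 W2 UW sD by (simp add: field_simps)
  have "(\<eta> * \<tau>2 \<eta>, \<eta> * \<tau>1 (\<tau>2 \<eta>), \<eta> * \<tau>1 (\<tau>3 \<eta>), \<eta> * \<tau>2 (\<tau>3 \<eta>), \<eta> * \<tau>1 \<eta>)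
       = (Fsg e (-1) 1, Fsg e ((-1)*(-1)) ((-1)*1), Fsg e ((-1)*(-1)) ((-1)*1), Fsg e ((-1)*(-1)) (1*1), Fsg e (-1) (-1))"
    by (rule TG[OF UK WK]) (use M1[OF c1Q] M1[OF c2Q] M2[OF c1Q] M2[OF c2Q] M3[OF c1Q] M3[OF c2Q] U2 W2 ee eta in
        \<open>auto simp: U_def W_def\<close>)
  thus ?thesis by (simp add: Fsg_def)
qed

lemma case5:
  fixes x y :: int and e \<eta> :: real
  assumes pp: "p > 0" and rel: "x^2 - int (p*q) * y^2 = 1" and x2: "x \<ge> 2" and y1: "y \<ge> 1"
    and e: "e = real_of_int x + real_of_int y * sqrt (real (p*q))"
    and h: "is_nat_square (int p * (x - 1))" and eta: "\<eta>^2 = e"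
  shows "(\<eta> * \<tau>2 \<eta>, \<eta> * \<tau>1 (\<tau>2 \<eta>), \<eta> * \<tau>1 (\<tau>3 \<eta>), \<eta> * \<tau>2 (\<tau>3 \<eta>), \<eta> * \<tau>1 \<eta>) = (1, -1, 1, -e, -e)"
proof -
  have pnz: "real p > 0" using pp by simp
  obtain n :: nat where n: "int p * (x - 1) = int n ^ 2" using h unfolding is_nat_square_def by blast
  define a where "a = real n"
  have a2: "a^2 = real p * (real_of_int x - 1)"
  proof -
    have "real_of_int (int p * (x - 1)) = a^2" unfolding a_def n by simp
    thus ?thesis by simp
  qed
  have xr: "real_of_int x \<ge> 2" using x2 by simp
  have xm: "real_of_int x - 1 \<noteq> 0" and xp: "real_of_int x + 1 \<noteq> 0" using xr by auto
  have nz: "2 * real p * (real_of_int x + 1) \<noteq> 0" using pnz xp by simp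
  have "a^2 > 0" unfolding a2 using xr pnz by simp
  hence "a \<noteq> 0" by auto
  hence apos: "a > 0" unfolding a_def by simp
  have relr: "(real_of_int x)^2 - real (p*q) * (real_of_int y)^2 = 1"
  proof -
    have "real_of_int (x^2 - int (p*q) * y^2) = 1" using rel by simp
    thus ?thesis by simp
  qed
  have K1h: "real_of_int y^2 * (real p * real q) = ((real_of_int x + 1) * (real_of_int x - 1)) / 1"
  proof -
    have "real (p*q) * (real_of_int y)^2 = 1 * (real_of_int y^2 * (real p * real q))" by (simp add: ac_simps)
    hence "1 * (real_of_int y^2 * (real p * real q)) = (real_of_int x)^2 - 1" using relr by linarith
    moreover have "(real_of_int x + 1) * (real_of_int x - 1) = (real_of_int x)^2 - 1" by (simp add: algebra_simps power2_eq_square)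
    ultimately show ?thesis by simp
  qed
  define c1 where "c1 = real p * real_of_int y / (2 * a)"
  define c2 where "c2 = a / (2 * real p)"
  have c1Q: "c1 \<in> \<rat>" and c2Q: "c2 \<in> \<rat>" unfolding c1_def c2_def a_def by simp_all
  define U where "U = c1 * (sqrt 2 * sqrt (real q))"
  define W where "W = c2 * (sqrt 2 * sqrt (real p))"
  have UK: "U \<in> triquad_field p q" unfolding U_def by (rule K_scale[OF c1Q K_sQ])
  have WK: "W \<in> triquad_field p q" unfolding W_def by (rule K_scale[OF c2Q K_sP])
  have U2: "U^2 = (real_of_int x + 1) / 2"
  proof -
    have "U^2 = real p * (real_of_int y^2 * (real p * real q)) / (2 * a^2)" unfolding U_def c1_def power_mult_distrib
      using apos pnz by (simp add: power_divide field_simps power2_eq_square)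
    also have "\<dots> = real p * ((real_of_int x + 1) * (real_of_int x - 1)) / (2 * (real p * (real_of_int x - 1)))" unfolding a2 K1h by simp
    also have "\<dots> = (real_of_int x + 1) / 2" using xm xp apos pnz a2 by (simp add: field_simps power2_eq_square)
    finally show ?thesis .
  qed
  have W2: "W^2 = (real_of_int x - 1) / 2"
  proof -
    have "W^2 = a^2 / (2 * real p)" unfolding W_def c2_def power_mult_distrib
      using apos pnz by (simp add: power_divide field_simps power2_eq_square)
    also have "\<dots> = real p * (real_of_int x - 1) / (2 * real p)" unfolding a2 K1h by simp
    also have "\<dots> = (real_of_int x - 1) / 2" using xm xp apos pnz a2 by (simp add: field_simps power2_eq_square)
    finally show ?thesis .
  qed
  have mm: "(sqrt 2 * sqrt (real q)) * (sqrt 2 * sqrt (real p)) = 2 * (sqrt (real p) * sqrt (real q))"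
  proof -
    have "(sqrt 2 * sqrt (real q)) * (sqrt 2 * sqrt (real p)) = (sqrt 2 * sqrt 2) * (sqrt (real p) * sqrt (real q))" by (simp only: mult_ac)
    also have "\<dots> = 2 * (sqrt (real p) * sqrt (real q))" by simp
    finally show ?thesis .
  qed
  have cc: "2 * c1 * c2 * 2 = real_of_int y" unfolding c1_def c2_def using apos pnz by (simp add: field_simps)
  have UW: "2 * U * W = real_of_int y * (sqrt (real p) * sqrt (real q))"
  proof -
    have "2 * U * W = (2 * c1 * c2) * ((sqrt 2 * sqrt (real q)) * (sqrt 2 * sqrt (real p)))" unfolding U_def W_def by (simp only: mult_ac)
    also have "\<dots> = (2 * c1 * c2 * 2) * (sqrt (real p) * sqrt (real q))" unfolding mm by (simp only: mult_ac)
    finally show ?thesis unfolding cc .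
  qed
  have sD: "sqrt (real (p*q)) = sqrt (real p) * sqrt (real q)" by (simp add: real_sqrt_mult)
  have ee: "e = (U + W)^2"
    unfolding e power2_sum U2 W2 UW sD by (simp add: field_simps)
  have "(\<eta> * \<tau>2 \<eta>, \<eta> * \<tau>1 (\<tau>2 \<eta>), \<eta> * \<tau>1 (\<tau>3 \<eta>), \<eta> * \<tau>2 (\<tau>3 \<eta>), \<eta> * \<tau>1 \<eta>)
       = (Fsg e 1 (-1), Fsg e ((-1)*1) ((-1)*(-1)), Fsg e ((-1)*(-1)) ((-1)*1), Fsg e (1*(-1)) ((-1)*1), Fsg e (-1) (-1))"
    by (rule TG[OF UK WK]) (use M1[OF c1Q] M1[OF c2Q] M2[OF c1Q] M2[OF c2Q] M3[OF c1Q] M3[OF c2Q] U2 W2 ee eta in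
        \<open>auto simp: U_def W_def\<close>)
  thus ?thesis by (simp add: Fsg_def)
qed

lemma case6:
  fixes x y :: int and e \<eta> :: real
  assumes pp: "p > 0" and rel: "x^2 - int (p*q) * y^2 = 1" and x2: "x \<ge> 2" and y1: "y \<ge> 1"
    and e: "e = real_of_int x + real_of_int y * sqrt (real (p*q))"
    and h: "is_nat_square (2 * int p * (x + 1))" and eta: "\<eta>^2 = e"
  shows "(\<eta> * \<tau>2 \<eta>, \<eta> * \<tau>1 (\<tau>2 \<eta>), \<eta> * \<tau>1 (\<tau>3 \<eta>), \<eta> * \<tau>2 (\<tau>3 \<eta>), \<eta> * \<tau>1 \<eta>) = (-1, -1, 1, -e, e)"
proof -
  have pnz: "real p > 0" using pp by simp
  obtain n :: nat where n: "2 * int p * (x + 1) = int n ^ 2" using h unfolding is_nat_square_def by blast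
  define a where "a = real n"
  have a2: "a^2 = 2 * real p * (real_of_int x + 1)"
  proof -
    have "real_of_int (2 * int p * (x + 1)) = a^2" unfolding a_def n by simp
    thus ?thesis by simp
  qed
  have xr: "real_of_int x \<ge> 2" using x2 by simp
  have xm: "real_of_int x - 1 \<noteq> 0" and xp: "real_of_int x + 1 \<noteq> 0" using xr by auto
  have nz: "2 * real p * (real_of_int x + 1) \<noteq> 0" using pnz xp by simp
  have "a^2 > 0" unfolding a2 using xr pnz by simp
  hence "a \<noteq> 0" by auto
  hence apos: "a > 0" unfolding a_def by simp
  have relr: "(real_of_int x)^2 - real (p*q) * (real_of_int y)^2 = 1"
  proof -
    have "real_of_int (x^2 - int (p*q) * y^2) = 1" using rel by simp
    thus ?thesis by simp
  qed
  have K1h: "real_of_int y^2 * (real p * real q) = ((real_of_int x + 1) * (real_of_int x - 1)) / 1"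
  proof -
    have "real (p*q) * (real_of_int y)^2 = 1 * (real_of_int y^2 * (real p * real q))" by (simp add: ac_simps)
    hence "1 * (real_of_int y^2 * (real p * real q)) = (real_of_int x)^2 - 1" using relr by linarith
    moreover have "(real_of_int x + 1) * (real_of_int x - 1) = (real_of_int x)^2 - 1" by (simp add: algebra_simps power2_eq_square)
    ultimately show ?thesis by simp
  qed
  define c1 where "c1 = a / (2 * real p)"
  define c2 where "c2 = real p * real_of_int y / a"
  have c1Q: "c1 \<in> \<rat>" and c2Q: "c2 \<in> \<rat>" unfolding c1_def c2_def a_def by simp_all
  define U where "U = c1 * sqrt (real p)"
  define W where "W = c2 * sqrt (real q)"
  have UK: "U \<in> triquad_field p q" unfolding U_def by (rule K_scale[OF c1Q K_P])
  have WK: "W \<in> triquad_field p q" unfolding W_def by (rule K_scale[OF c2Q K_Q])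
  have U2: "U^2 = (real_of_int x + 1) / 2"
  proof -
    have "U^2 = a^2 / (4 * real p)" unfolding U_def c1_def power_mult_distrib
      using apos pnz by (simp add: power_divide field_simps power2_eq_square)
    also have "\<dots> = 2 * real p * (real_of_int x + 1) / (4 * real p)" unfolding a2 K1h by simp
    also have "\<dots> = (real_of_int x + 1) / 2" using xm xp apos pnz a2 by (simp add: field_simps power2_eq_square)
    finally show ?thesis .
  qed
  have W2: "W^2 = (real_of_int x - 1) / 2"
  proof -
    have "W^2 = real p * (real_of_int y^2 * (real p * real q)) / a^2" unfolding W_def c2_def power_mult_distrib
      using apos pnz by (simp add: power_divide field_simps power2_eq_square)
    also have "\<dots> = real p * ((real_of_int x + 1) * (real_of_int x - 1)) / (2 * real p * (real_of_int x + 1))" unfolding a2 K1h by simp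
    also have "\<dots> = (2 * real p * (real_of_int x + 1)) * (real_of_int x - 1) / ((2 * real p * (real_of_int x + 1)) * 2)" using nz by (simp add: field_simps)
    also have "\<dots> = (real_of_int x - 1) / 2" using nz by (rule nonzero_mult_divide_mult_cancel_left)
    finally show ?thesis .
  qed
  have cc: "2 * c1 * c2 = real_of_int y" unfolding c1_def c2_def using apos pnz by (simp add: field_simps)
  have UW: "2 * U * W = real_of_int y * (sqrt (real p) * sqrt (real q))"
  proof -
    have "2 * U * W = (2 * c1 * c2) * (sqrt (real p) * sqrt (real q))" unfolding U_def W_def by (simp only: mult_ac)
    thus ?thesis unfolding cc .
  qed
  have sD: "sqrt (real (p*q)) = sqrt (real p) * sqrt (real q)" by (simp add: real_sqrt_mult)
  have ee: "e = (U + W)^2"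
    unfolding e power2_sum U2 W2 UW sD by (simp add: field_simps)
  have "(\<eta> * \<tau>2 \<eta>, \<eta> * \<tau>1 (\<tau>2 \<eta>), \<eta> * \<tau>1 (\<tau>3 \<eta>), \<eta> * \<tau>2 (\<tau>3 \<eta>), \<eta> * \<tau>1 \<eta>)
       = (Fsg e (-1) 1, Fsg e (1*(-1)) (1*1), Fsg e (1*1) (1*(-1)), Fsg e ((-1)*1) (1*(-1)), Fsg e 1 1)"
    by (rule TG[OF UK WK]) (use M1[OF c1Q] M1[OF c2Q] M2[OF c1Q] M2[OF c2Q] M3[OF c1Q] M3[OF c2Q] U2 W2 ee eta in
        \<open>auto simp: U_def W_def\<close>)
  thus ?thesis by (simp add: Fsg_def)
qed

end

theorem mainTheorem5:
  fixes p q :: nat and x y v w :: int and \<tau>1 \<tau>2 \<tau>3 :: "real \<Rightarrow> real"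
  assumes "prime p" and "prime q" and "p mod 8 = 1" and "q mod 8 = 3"
    and "Legendre (int p) (int q) = 1"
    and eps1: "fund_unit (2 * p * q) = real_of_int x + real_of_int y * sqrt (real (2 * p * q))"
    and eps2: "fund_unit (p * q) = real_of_int v + real_of_int w * sqrt (real (p * q))"
    and t1: "field_aut (triquad_field p q) \<tau>1" "\<tau>1 (sqrt 2) = - sqrt 2"
            "\<tau>1 (sqrt (real p)) = sqrt (real p)" "\<tau>1 (sqrt (real q)) = sqrt (real q)"
    and t2: "field_aut (triquad_field p q) \<tau>2" "\<tau>2 (sqrt 2) = sqrt 2"
            "\<tau>2 (sqrt (real p)) = - sqrt (real p)" "\<tau>2 (sqrt (real q)) = sqrt (real q)"
    and t3: "field_aut (triquad_field p q) \<tau>3" "\<tau>3 (sqrt 2) = sqrt 2"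
            "\<tau>3 (sqrt (real p)) = sqrt (real p)" "\<tau>3 (sqrt (real q)) = - sqrt (real q)"
  shows
    "(\<exists>\<eta>\<in>triquad_field p q. \<eta>\<^sup>2 = fund_unit (2 * p * q)) \<and>
     (\<exists>\<eta>\<in>triquad_field p q. \<eta>\<^sup>2 = fund_unit (p * q)) \<and>
     (\<forall>\<eta>\<in>triquad_field p q. \<eta>\<^sup>2 = fund_unit (2 * p * q) \<longrightarrow>
        (let e = fund_unit (2 * p * q);
             T = (\<eta> * \<tau>2 \<eta>, \<eta> * \<tau>1 (\<tau>2 \<eta>), \<eta> * \<tau>1 (\<tau>3 \<eta>), \<eta> * \<tau>2 (\<tau>3 \<eta>), \<eta> * \<tau>1 \<eta>)
         in (is_nat_square (x - 1) \<longrightarrow> T = (-1, -e, -e, e, 1)) \<and>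
            (is_nat_square (int p * (x - 1)) \<longrightarrow> T = (1, e, -e, -e, 1)) \<and>
            (is_nat_square (2 * int p * (x + 1)) \<longrightarrow> T = (-1, -e, e, -e, 1)))) \<and>
     (\<forall>\<eta>\<in>triquad_field p q. \<eta>\<^sup>2 = fund_unit (p * q) \<longrightarrow>
        (let e = fund_unit (p * q);
             T = (\<eta> * \<tau>2 \<eta>, \<eta> * \<tau>1 (\<tau>2 \<eta>), \<eta> * \<tau>1 (\<tau>3 \<eta>), \<eta> * \<tau>2 (\<tau>3 \<eta>), \<eta> * \<tau>1 \<eta>)
         in (is_nat_square (v - 1) \<longrightarrow> T = (-1, 1, 1, e, -e)) \<and>
            (is_nat_square (int p * (v - 1)) \<longrightarrow> T = (1, -1, 1, -e, -e)) \<and>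
            (is_nat_square (2 * int p * (v + 1)) \<longrightarrow> T = (-1, -1, 1, -e, e))))"
proof -
  have pp: "p > 0" "q > 0" using assms(1,2) by (simp_all add: prime_gt_0_nat)
  have p2: "p \<noteq> 2" using assms(3) by auto
  have pq: "p \<noteq> q" using assms(3,4) by auto
  have nsq: "\<not> p^2 dvd p * m" if m: "m = q \<or> m = 2 * q" for m
  proof
    assume "p^2 dvd p * m"
    hence "p * p dvd p * m" by (simp add: power2_eq_square)
    hence "p dvd m" using pp by simp
    hence "p dvd q \<or> p dvd 2"
      using m prime_dvd_mult_iff[OF assms(1), of 2 q] by auto
    moreover have "\<not> p dvd q" using primes_dvd_imp_eq[OF assms(1,2)] pq by blast
    moreover have "\<not> p dvd 2"
    proof
      assume "p dvd 2"
      hence "p \<le> 2" by (simp add: dvd_imp_le)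
      thus False using assms(3) prime_gt_1_nat[OF assms(1)] by auto
    qed
    ultimately show False by blast
  qed
  have irr1: "sqrt (real (2*p*q)) \<notin> \<rat>"
  proof (rule not_sq[OF assms(1)])
    show "p dvd 2*p*q" by simp
    show "\<not> p^2 dvd 2*p*q" using nsq[of "2*q"] by (simp add: ac_simps)
  qed
  have irr2: "sqrt (real (p*q)) \<notin> \<rat>"
  proof (rule not_sq[OF assms(1)])
    show "p dvd p*q" by simp
    show "\<not> p^2 dvd p*q" using nsq[of q] by simp
  qed
  have q4: "q mod 4 = 3" using assms(4) by presburger
  have no1: "x^2 - int (2*p*q) * y^2 \<noteq> -1" by (rule no_neg_pell[OF assms(2) q4]) simp
  have no2: "v^2 - int (p*q) * w^2 \<noteq> -1" by (rule no_neg_pell[OF assms(2) q4]) simp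
  have F1: "x^2 - int (2*p*q) * y^2 = 1 \<and> x \<ge> 2 \<and> y \<ge> 1" using eps_facts[OF irr1 no1 eps1] .
  have F2: "v^2 - int (p*q) * w^2 = 1 \<and> v \<ge> 2 \<and> w \<ge> 1" using eps_facts[OF irr2 no2 eps2] .
  have ex1: "\<exists>\<eta>\<in>triquad_field p q. \<eta>\<^sup>2 = fund_unit (2 * p * q)"
    using exist_2pq[OF assms(1,2,3,4)] F1 eps1 by auto
  have ex2: "\<exists>\<eta>\<in>triquad_field p q. \<eta>\<^sup>2 = fund_unit (p * q)"
    using exist_pq[OF assms(1,2,3,4)] F2 eps2 by auto
  have A1: "\<forall>\<eta>\<in>triquad_field p q. \<eta>\<^sup>2 = fund_unit (2 * p * q) \<longrightarrow>
        (let e = fund_unit (2 * p * q);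
             T = (\<eta> * \<tau>2 \<eta>, \<eta> * \<tau>1 (\<tau>2 \<eta>), \<eta> * \<tau>1 (\<tau>3 \<eta>), \<eta> * \<tau>2 (\<tau>3 \<eta>), \<eta> * \<tau>1 \<eta>)
         in (is_nat_square (x - 1) \<longrightarrow> T = (-1, -e, -e, e, 1)) \<and>
            (is_nat_square (int p * (x - 1)) \<longrightarrow> T = (1, e, -e, -e, 1)) \<and>
            (is_nat_square (2 * int p * (x + 1)) \<longrightarrow> T = (-1, -e, e, -e, 1)))"
    unfolding Let_def
    using case1[OF t1 t2 t3 pp(1), of x y "fund_unit (2*p*q)"]
          case2[OF t1 t2 t3 pp(1), of x y "fund_unit (2*p*q)"]
          case3[OF t1 t2 t3 pp(1), of x y "fund_unit (2*p*q)"] F1 eps1 by blast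
  have A2: "\<forall>\<eta>\<in>triquad_field p q. \<eta>\<^sup>2 = fund_unit (p * q) \<longrightarrow>
        (let e = fund_unit (p * q);
             T = (\<eta> * \<tau>2 \<eta>, \<eta> * \<tau>1 (\<tau>2 \<eta>), \<eta> * \<tau>1 (\<tau>3 \<eta>), \<eta> * \<tau>2 (\<tau>3 \<eta>), \<eta> * \<tau>1 \<eta>)
         in (is_nat_square (v - 1) \<longrightarrow> T = (-1, 1, 1, e, -e)) \<and>
            (is_nat_square (int p * (v - 1)) \<longrightarrow> T = (1, -1, 1, -e, -e)) \<and>
            (is_nat_square (2 * int p * (v + 1)) \<longrightarrow> T = (-1, -1, 1, -e, e)))"
    unfolding Let_def
    using case4[OF t1 t2 t3 pp(1), of v w "fund_unit (p*q)"]
          case5[OF t1 t2 t3 pp(1), of v w "fund_unit (p*q)"]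
          case6[OF t1 t2 t3 pp(1), of v w "fund_unit (p*q)"] F2 eps2 by blast
  show ?thesis using ex1 ex2 A1 A2 by blast
qed

end
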